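(* Let $B,\alpha_+,\beta_+,\gamma_+,\delta_+,\beta_-,\gamma_-$ be real numbers with $B>\delta_+>0$, and let $I:[0,b[\to\mathbb R$ be the slow divergence integral defined in the context. If $$\big(\beta_-\ne 0 \text{ and } (\alpha_+,\gamma_-)\ne(0,0)\big)\quad\text{or}\quad\big(\beta_-=0 \text{ and } \alpha_++\gamma_-(B-\delta_+)\ne 0\big),$$ then $I$ has at most $1$ zero, counting multiplicity, in $]0,b[$. Moreover, there exist parameter values $(\beta_-,\gamma_-,B,\alpha_+,\delta_+)$ satisfying this condition for which $I$ has a simple zero in $]0,b[$. If the condition is not satisfied, then $I$ is identically zero.
   Context: Consider the planar affine vector fields $Z^-(x,y)=(-1+\beta_- y,\,-x+\gamma_- y)$ and $Z^+(x,y)=(B+\alpha_+x+\beta_+y,\,\delta_+x+\gamma_+y)$, with $B>\delta_+>0$ ($Z^+$ acts in $y>0$, $Z^-$ in $y<0$, discontinuity line $y=0$). Let $X^{sl}(u)=\frac{1}{1+\delta_+}(B-\delta_++\alpha_+u)$ (the Filippov sliding vector field on $y=0$). Poincaré half-map $\Pi$: for $x>0$ the forward orbit of $Z^-$ through $(x,0)$ enters $\{y<0\}$; when it returns to $\{y=0\}$, its first return point is $(\Pi(x),0)$ with $\Pi(x)<0$; set $\Pi(0)=0$. The domain of $\Pi$ is the set of $x\ge 0$ where it is defined (an interval containing $0$). Let $\phi:\mathbb R\to\mathbb R$ be a smooth function with $\phi'>0$, $\phi(s)\to 1$ as $s\to+\infty$, $\phi(s)\to0$ as $s\to-\infty$.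 The slow divergence integral is $$I(x)=(1+\delta_+)\,\phi'\!\Big(\phi^{-1}\big(\tfrac{1}{1+\delta_+}\big)\Big)\int_{\Pi(x)}^{x}\frac{u\,du}{X^{sl}(u)},$$ defined on $[0,b[$ ($b>0$ or $b=+\infty$), the largest interval of the form $[0,b[$ contained in the domain of $\Pi$ such that $X^{sl}>0$ on $[\Pi(x),x]$ for every $x\in[0,b[$. *)

theory Defs
  imports "HOL-Analysis.Analysis"
begin

text \<open>The affine vector field Z^- acting in y < 0.\<close>
definition Zm :: "real \<Rightarrow> real \<Rightarrow> real \<times> real \<Rightarrow> real \<times> real" where
  "Zm bm gm z = (-1 + bm * snd z, - fst z + gm * snd z)"

text \<open>Filippov sliding vector field on y = 0.\<close>
definition Xsl :: "real \<Rightarrow> real \<Rightarrow> real \<Rightarrow> real \<Rightarrow> real" where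
  "Xsl B ap dp u = (B - dp + ap * u) / (1 + dp)"

definition pi_ret :: "real \<Rightarrow> real \<Rightarrow> real \<Rightarrow> real \<Rightarrow> bool" where
  "pi_ret bm gm x u \<longleftrightarrow>
     (\<exists>p t. t > 0 \<and> p 0 = (x, 0) \<and>
        (\<forall>s. (p has_vector_derivative Zm bm gm (p s)) (at s)) \<and>
        (\<forall>s\<in>{0<..<t}. snd (p s) < 0) \<and> p t = (u, 0))"

definition Pi_map :: "real \<Rightarrow> real \<Rightarrow> real \<Rightarrow> real" where
  "Pi_map bm gm x = (if x = 0 then 0 else (THE u. pi_ret bm gm x u))"

definition Pi_dom :: "real \<Rightarrow> real \<Rightarrow> real set" where
  "Pi_dom bm gm = {x. x = 0 \<or> (x > 0 \<and> (\<exists>u. pi_ret bm gm x u))}"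

definition good_set :: "real \<Rightarrow> real \<Rightarrow> real \<Rightarrow> real \<Rightarrow> real \<Rightarrow> real set" where
  "good_set B ap dp bm gm =
     {x \<in> Pi_dom bm gm. \<forall>u\<in>{Pi_map bm gm x..x}. Xsl B ap dp u > 0}"

text \<open>The open interval ]0,b[ where [0,b[ is the largest interval of that form
  contained in good_set.\<close>
definition open_int :: "real \<Rightarrow> real \<Rightarrow> real \<Rightarrow> real \<Rightarrow> real \<Rightarrow> real set" where
  "open_int B ap dp bm gm = {x. x > 0 \<and> {0..x} \<subseteq> good_set B ap dp bm gm}"

definition sdi :: "(real \<Rightarrow> real) \<Rightarrow> real \<Rightarrow> real \<Rightarrow> real \<Rightarrow> real \<Rightarrow> real \<Rightarrow> real \<Rightarrow> real" where
  "sdi phi B ap dp bm gm x =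
     (1 + dp) * deriv phi (inv phi (1 / (1 + dp))) *
     integral {Pi_map bm gm x..x} (\<lambda>u. u / Xsl B ap dp u)"

definition simple_zero :: "(real \<Rightarrow> real) \<Rightarrow> real \<Rightarrow> bool" where
  "simple_zero f x \<longleftrightarrow> f x = 0 \<and> (\<exists>d. (f has_real_derivative d) (at x) \<and> d \<noteq> 0)"

definition at_most_one_zero_mult :: "(real \<Rightarrow> real) \<Rightarrow> real set \<Rightarrow> bool" where
  "at_most_one_zero_mult f S \<longleftrightarrow>
     (\<forall>x\<in>S. f x = 0 \<longrightarrow> simple_zero f x) \<and>
     (\<forall>x\<in>S. \<forall>y\<in>S. f x = 0 \<and> f y = 0 \<longrightarrow> x = y)"

definition sdi_cond :: "real \<Rightarrow> real \<Rightarrow> real \<Rightarrow> real \<Rightarrow> real \<Rightarrow> bool" where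
  "sdi_cond bm gm B ap dp \<longleftrightarrow>
     (bm \<noteq> 0 \<and> (ap, gm) \<noteq> (0, 0)) \<or> (bm = 0 \<and> ap + gm * (B - dp) \<noteq> 0)"

end

theory Submission imports Defs begin

definition Wq :: "real \<Rightarrow> real \<Rightarrow> real \<Rightarrow> real" where
  "Wq b g v = 1 - g * v + b * v^2"

definition fW :: "real \<Rightarrow> real \<Rightarrow> real \<Rightarrow> real" where
  "fW b g v = v / Wq b g v"

definition partner :: "real \<Rightarrow> real \<Rightarrow> real \<Rightarrow> real \<Rightarrow> bool" where
  "partner b g x q \<longleftrightarrow> q < 0 \<and> (\<forall>v\<in>{q..x}. Wq b g v > 0) \<and> integral {q..x} (fW b g) = 0"

lemma vd_fst:
  assumes "(p has_vector_derivative v) (at s)"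
  shows "((\<lambda>s. fst (p s)) has_real_derivative fst v) (at s)"
proof -
  have "(p has_derivative (\<lambda>h. h *\<^sub>R v)) (at s)" using assms by (simp add: has_vector_derivative_def)
  from has_derivative_fst[OF this] have "((\<lambda>s. fst (p s)) has_derivative (\<lambda>h. h * fst v)) (at s)" by simp
  moreover have "(\<lambda>h. h * fst v) = (*) (fst v)" by (rule ext) (simp add: mult.commute)
  ultimately show ?thesis unfolding has_field_derivative_def by simp
qed

lemma vd_snd:
  assumes "(p has_vector_derivative v) (at s)"
  shows "((\<lambda>s. snd (p s)) has_real_derivative snd v) (at s)"
proof -
  have "(p has_derivative (\<lambda>h. h *\<^sub>R v)) (at s)" using assms by (simp add: has_vector_derivative_def)
  from has_derivative_snd[OF this] have "((\<lambda>s. snd (p s)) has_derivative (\<lambda>h. h * snd v)) (at s)" by simp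
  moreover have "(\<lambda>h. h * snd v) = (*) (snd v)" by (rule ext) (simp add: mult.commute)
  ultimately show ?thesis unfolding has_field_derivative_def by simp
qed

lemma lin_ode_exp:
  fixes f :: "real \<Rightarrow> real"
  assumes "\<And>s. (f has_real_derivative k * f s) (at s)"
  shows "f s = f 0 * exp (k * s)"
proof -
  define h where "h s = f s * exp (- k * s)" for s
  have "\<forall>s. (h has_real_derivative 0) (at s)"
  proof
    fix s
    show "(h has_real_derivative 0) (at s)"
      unfolding h_def[abs_def] by (auto intro!: derivative_eq_intros assms simp: algebra_simps)
  qed
  from DERIV_isconst_all[OF this] have "h s = h 0" .
  then have "f s * exp (- k * s) = f 0" by (simp add: h_def)
  then have "f s * exp (- k * s) * exp (k * s) = f 0 * exp (k * s)" by simp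
  then show ?thesis by (simp add: mult.assoc exp_add[symmetric])
qed


lemma prim_deriv:
  fixes f :: "real \<Rightarrow> real"
  assumes "continuous_on {a..b} f" "a < v" "v < b"
  shows "((\<lambda>v. integral {a..v} f) has_real_derivative f v) (at v)"
proof -
  have "((\<lambda>v. integral {a..v} f) has_real_derivative f v) (at v within {a..b})"
    using integral_has_real_derivative[OF assms(1), of v] assms by auto
  moreover have "at v within {a..b} = at v" using assms by (simp add: at_within_Icc_at)
  ultimately show ?thesis by simp
qed

lemma prim_cont:
  fixes f :: "real \<Rightarrow> real"
  assumes "continuous_on {a..b} f"
  shows "continuous_on {a..b} (\<lambda>v. integral {a..v} f)"
  by (rule indefinite_integral_continuous_1[OF integrable_continuous_interval[OF assms]])

lemma int_split:
  fixes f :: "real \<Rightarrow> real"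
  assumes "continuous_on {a..b} f" "a \<le> c" "c \<le> b"
  shows "integral {a..b} f = integral {a..c} f + integral {c..b} f"
  using Henstock_Kurzweil_Integration.integral_combine[OF assms(2,3) integrable_continuous_interval[OF assms(1)]] by simp

lemma int_pos:
  fixes f :: "real \<Rightarrow> real"
  assumes "a < b" "continuous_on {a..b} f" "\<And>v. a < v \<Longrightarrow> v < b \<Longrightarrow> f v > 0"
  shows "integral {a..b} f > 0"
proof -
  have "integral {a..a} f < integral {a..b} f"
    by (rule DERIV_pos_imp_increasing_open[OF assms(1) _ prim_cont[OF assms(2)]])
       (use prim_deriv[OF assms(2)] assms(3) in blast)
  then show ?thesis by simp
qed

lemma int_neg:
  fixes f :: "real \<Rightarrow> real"
  assumes "a < b" "continuous_on {a..b} f" "\<And>v. a < v \<Longrightarrow> v < b \<Longrightarrow> f v < 0"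
  shows "integral {a..b} f < 0"
proof -
  have "integral {a..a} f > integral {a..b} f"
    by (rule DERIV_neg_imp_decreasing_open[OF assms(1) _ prim_cont[OF assms(2)]])
       (use prim_deriv[OF assms(2)] assms(3) in blast)
  then show ?thesis by simp
qed

lemma int_nonpos:
  fixes f :: "real \<Rightarrow> real"
  assumes "a \<le> b" "continuous_on {a..b} f" "\<And>v. a < v \<Longrightarrow> v < b \<Longrightarrow> f v < 0"
  shows "integral {a..b} f \<le> 0"
  using int_neg[OF _ assms(2,3)] assms(1) by (cases "a = b") force+

lemma Wq_cont: "continuous_on S (Wq b g)"
  unfolding Wq_def[abs_def] by (intro continuous_intros)

lemma isCont_Wq: "isCont (Wq b g) v"
  unfolding Wq_def[abs_def] by (intro continuous_intros)

lemma fW_cont: "(\<And>v. v \<in> S \<Longrightarrow> Wq b g v > 0) \<Longrightarrow> continuous_on S (fW b g)"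
  unfolding fW_def[abs_def] Wq_def[abs_def] by (intro continuous_intros) force

lemma Wq_deriv: "(Wq b g has_real_derivative (- g + 2 * b * v)) (at v)"
  unfolding Wq_def[abs_def] by (auto intro!: derivative_eq_intros)

locale zsol =
  fixes b g x :: real and p :: "real \<Rightarrow> real \<times> real"
  assumes der: "\<And>s. (p has_vector_derivative Zm b g (p s)) (at s)"
    and init: "p 0 = (x, 0)"
begin

definition "X s = fst (p s)"
definition "Y s = snd (p s)"
definition "D s = 1 - b * Y s"
definition "V s = X s - g * Y s"
definition "P s = (D s)^2 - g * D s * V s + b * (V s)^2"
definition "u s = V s / D s"

lemma X': "(X has_real_derivative (-1 + b * Y s)) (at s)"
  using vd_fst[OF der[of s]] unfolding X_def Y_def by (simp add: Zm_def)

lemma Y': "(Y has_real_derivative (- X s + g * Y s)) (at s)"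
  using vd_snd[OF der[of s]] unfolding X_def Y_def by (simp add: Zm_def)

lemma D': "(D has_real_derivative (b * V s)) (at s)"
proof -
  show ?thesis unfolding D_def[abs_def] V_def
    by (auto intro!: derivative_eq_intros Y' simp: algebra_simps)
qed

lemma V': "(V has_real_derivative (- D s + g * V s)) (at s)"
proof -
  show ?thesis unfolding V_def[abs_def] D_def
    by (auto intro!: derivative_eq_intros X' Y' simp: algebra_simps)
qed

lemma P': "(P has_real_derivative (g * P s)) (at s)"
proof -
  have "(P has_real_derivative (2 * D s * (b * V s) - g * ((b * V s) * V s + D s * (- D s + g * V s)) + b * (2 * V s * (- D s + g * V s)))) (at s)"
    unfolding P_def[abs_def] by (auto intro!: derivative_eq_intros D' V') algebra
  moreover have "2 * D s * (b * V s) - g * ((b * V s) * V s + D s * (- D s + g * V s)) + b * (2 * V s * (- D s + g * V s)) = g * P s"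
    unfolding P_def power2_eq_square by algebra
  ultimately show ?thesis by simp
qed

lemma X0: "X 0 = x" and Y0: "Y 0 = 0" and D0: "D 0 = 1" and V0: "V 0 = x"
  by (simp_all add: X_def Y_def D_def V_def init)

lemma P_exp: "P s = Wq b g x * exp (g * s)"
  using lin_ode_exp[of P g s, OF P'] by (simp add: P_def D0 V0 Wq_def power2_eq_square)


lemma isCont_X: "isCont X s" using X' DERIV_isCont by blast
lemma isCont_Y: "isCont Y s" using Y' DERIV_isCont by blast
lemma isCont_D: "isCont D s" using D' DERIV_isCont by blast
lemma isCont_V: "isCont V s" using V' DERIV_isCont by blast
lemma cont_D: "continuous_on S D" by (simp add: continuous_at_imp_continuous_on isCont_D)
lemma cont_V: "continuous_on S V" by (simp add: continuous_at_imp_continuous_on isCont_V)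
lemma cont_Y: "continuous_on S Y" by (simp add: continuous_at_imp_continuous_on isCont_Y)

lemma u': assumes "D s \<noteq> 0" shows "(u has_real_derivative (- Wq b g (u s))) (at s)"
proof -
  have "(u has_real_derivative (((- D s + g * V s) * D s - V s * (b * V s)) / (D s * D s))) (at s)"
    unfolding u_def[abs_def] by (rule DERIV_divide[OF V' D' assms])
  moreover have "((- D s + g * V s) * D s - V s * (b * V s)) / (D s * D s) = - Wq b g (u s)"
    using assms unfolding Wq_def u_def by (simp add: field_simps power2_eq_square)
  ultimately show ?thesis by simp
qed

lemma Wq_u: assumes "D s \<noteq> 0" shows "Wq b g (u s) = P s / (D s)^2"
  using assms unfolding Wq_def u_def P_def by (simp add: field_simps power2_eq_square)

lemma Dpos:
  assumes W: "Wq b g x > 0" and Yle: "\<And>s. s \<in> {0..T} \<Longrightarrow> Y s \<le> 0" and s: "s \<in> {0..T}"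
  shows "D s > 0"
proof (cases "b \<ge> 0")
  case True
  then show ?thesis using Yle[OF s] unfolding D_def by (smt (verit) mult_nonneg_nonpos)
next
  case False
  have nz: "D r \<noteq> 0" for r
  proof
    assume "D r = 0"
    then have "P r = b * (V r)^2" by (simp add: P_def)
    also have "\<dots> \<le> 0" using False by (simp add: mult_nonpos_nonneg)
    finally show False using P_exp[of r] W by (smt (verit) exp_gt_zero mult_pos_pos)
  qed
  show ?thesis
  proof (rule ccontr)
    assume "\<not> D s > 0"
    then have "D s \<le> 0" by simp
    then obtain z where "0 \<le> z" "z \<le> s" "D z = 0"
      using IVT2'[of D s 0 0, OF _ _ _ cont_D] s D0 by auto
    then show False using nz by blast
  qed
qed

lemma u_cont: assumes "\<And>s. s \<in> S \<Longrightarrow> D s \<noteq> 0" shows "continuous_on S u"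
  by (rule continuous_at_imp_continuous_on) (use u' assms DERIV_isCont in blast)

lemma core:
  assumes x: "x > 0" and t: "t > 0" and neg: "\<And>s. s \<in> {0<..<t} \<Longrightarrow> Y s < 0" and Yt: "Y t = 0"
  shows "partner b g x (X t)"
proof -
  have Yle: "Y s \<le> 0" if "s \<in> {0..t}" for s
  proof -
    show ?thesis
    proof (cases "s = 0 \<or> s = t")
      case True then show ?thesis using Y0 Yt by auto
    next
      case False
      then have "s \<in> {0<..<t}" using that by auto
      then show ?thesis using neg by force
    qed
  qed
  obtain \<xi> where xi: "0 < \<xi>" "\<xi> < t" "V \<xi> < 0"
  proof -
    have "\<exists>l z. t/2 < z \<and> z < t \<and> DERIV Y z :> l \<and> Y t - Y (t/2) = (t - t/2) * l"
    proof (rule MVT)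
      show "t / 2 < t" using t by simp
      show "continuous_on {t/2..t} Y" by (rule cont_Y)
      show "Y differentiable (at r)" for r using Y' real_differentiable_def by blast
    qed
    then obtain l z where z: "t/2 < z" "z < t" "DERIV Y z :> l" "Y t - Y (t/2) = (t - t/2) * l"
      by blast
    have l: "l = - X z + g * Y z" using DERIV_unique[OF z(3) Y'] .
    have "Y (t/2) < 0" using neg[of "t/2"] t by auto
    then have "(t - t/2) * l > 0" using z(4) Yt by simp
    then have "l > 0" using t by (simp add: zero_less_mult_iff)
    then have "V z < 0" using l unfolding V_def by simp
    moreover have "0 < z" using z(1) t by simp
    ultimately show ?thesis using that z(2) by blast
  qed
  obtain s2 where s2: "0 \<le> s2" "s2 \<le> \<xi>" "V s2 = 0"
    using IVT2'[of V \<xi> 0 0, OF _ _ _ cont_V] xi V0 x by auto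
  have W: "Wq b g x > 0"
  proof (rule ccontr)
    assume "\<not> Wq b g x > 0"
    then consider "Wq b g x < 0" | "Wq b g x = 0" by linarith
    then show False
    proof cases
      case 1
      have "P s2 = (D s2)^2" using s2 by (simp add: P_def)
      then have "P s2 \<ge> 0" by simp
      then show False using P_exp[of s2] 1 by (smt (verit) exp_gt_zero mult_neg_pos)
    next
      case 2
      define E where "E s = V s - x * D s" for s
      have "(E has_real_derivative ((g - b * x) * E s)) (at s)" for s
      proof -
        have "(E has_real_derivative ((- D s + g * V s) - x * (b * V s))) (at s)"
          unfolding E_def[abs_def] by (auto intro!: derivative_eq_intros V' D')
        moreover have "(- D s + g * V s) - x * (b * V s) = (g - b * x) * E s"
        proof -
          have k: "g * x = 1 + b * x^2" using 2 by (simp add: Wq_def)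
          have "(g - b*x) * E s = g*V s - b*x*V s - (g*x) * D s + b*x^2*D s"
            unfolding E_def by (simp add: algebra_simps power2_eq_square)
          also have "\<dots> = g*V s - b*x*V s - D s" by (simp add: k algebra_simps)
          finally show ?thesis by (simp add: algebra_simps)
        qed
        ultimately show ?thesis by simp
      qed
      from lin_ode_exp[of E, OF this] have E0: "E s = 0" for s by (simp add: E_def V0 D0)
      have "(D has_real_derivative ((b * x) * D s)) (at s)" for s
        using D'[of s] E0[of s] unfolding E_def by (simp add: algebra_simps)
      from lin_ode_exp[of D, OF this] have "D s = exp (b * x * s)" for s by (simp add: D0)
      then have "V \<xi> > 0" using E0[of \<xi>] x unfolding E_def by simp
      then show False using xi by simp
    qed
  qed
  have Dp: "D s > 0" if "s \<in> {0..t}" for s using Dpos[OF W Yle that] .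
  have Wu: "Wq b g (u s) > 0" if "s \<in> {0..t}" for s
  proof -
    have "P s > 0" unfolding P_exp using W by simp
    moreover have "D s > 0" using Dp[OF that] .
    ultimately show ?thesis unfolding Wq_u[OF less_imp_neq[OF \<open>D s > 0\<close>, symmetric]] by simp
  qed
  have udec: "u s2 < u s1" if "0 \<le> s1" "s1 < s2" "s2 \<le> t" for s1 s2
  proof (rule DERIV_neg_imp_decreasing[OF that(2)])
    fix r assume "s1 \<le> r" "r \<le> s2"
    then have r: "r \<in> {0..t}" using that by simp
    show "\<exists>y. DERIV u r :> y \<and> y < 0"
      using u'[of r] Dp[OF r] Wu[OF r] by (intro exI[of _ "- Wq b g (u r)"]) simp
  qed
  have ucont: "continuous_on {0..t} u"
  proof (rule u_cont)
    fix s assume "s \<in> {0..t}"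
    then show "D s \<noteq> 0" using Dp by (metis less_irrefl)
  qed
  have u0: "u 0 = x" by (simp add: u_def V0 D0)
  have Dt: "D t = 1" by (simp add: D_def Yt)
  have ut: "u t = X t" by (simp add: u_def Dt V_def Yt)
  have Xtx: "X t < x" using udec[of 0 t] t u0 ut by simp
  have Wpos: "Wq b g v > 0" if vin: "v \<in> {X t..x}" for v
  proof -
    obtain s where "0 \<le> s" "s \<le> t" "u s = v"
      using IVT2'[of u t v 0, OF _ _ _ ucont] vin t u0 ut by auto
    then show ?thesis using Wu by auto
  qed
  have fc: "continuous_on {X t..x} (fW b g)" by (rule fW_cont) (use Wpos in auto)
  define \<Phi> where "\<Phi> v = integral {X t..v} (fW b g)" for v
  define \<Gamma> where "\<Gamma> s = (if b = 0 then - Y s else ln (D s) / b)" for s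
  define h where "h s = \<Phi> (u s) + \<Gamma> s" for s
  have urange: "u s \<in> {X t<..<x}" if "0 < s" "s < t" for s
  proof -
    have "u s < x" using udec[of 0 s] that u0 by simp
    moreover have "X t < u s" using udec[of s t] that ut by simp
    ultimately show ?thesis by simp
  qed
  have hder: "(h has_real_derivative 0) (at s)" if "0 < s" "s < t" for s
  proof -
    have Ds: "D s > 0" using Dp that by auto
    have d1: "((\<lambda>s. \<Phi> (u s)) has_real_derivative (fW b g (u s) * (- Wq b g (u s)))) (at s)"
      unfolding \<Phi>_def
      by (rule DERIV_chain2[OF prim_deriv[OF fc] u'[of s]]) (use urange[OF that] Ds in auto)
    have d2: "(\<Gamma> has_real_derivative (u s)) (at s)"
    proof (cases "b = 0")
      case True
      have "((\<lambda>s. - Y s) has_real_derivative (- (- X s + g * Y s))) (at s)"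
        by (auto intro!: derivative_eq_intros Y')
      moreover have "- (- X s + g * Y s) = u s" unfolding u_def D_def V_def using True by simp
      ultimately show ?thesis unfolding \<Gamma>_def[abs_def] using True by simp
    next
      case False
      have "((\<lambda>s. ln (D s) / b) has_real_derivative (b * V s / D s / b)) (at s)"
        by (auto intro!: derivative_eq_intros D' simp: Ds)
      moreover have "b * V s / D s / b = u s" unfolding u_def using False by simp
      ultimately show ?thesis unfolding \<Gamma>_def[abs_def] using False by simp
    qed
    have "fW b g (u s) * (- Wq b g (u s)) + u s = 0"
      using Wu[of s] that unfolding fW_def by simp
    then show ?thesis unfolding h_def[abs_def] using DERIV_add[OF d1 d2] by simp
  qed
  have hcont: "continuous_on {0..t} h"
  proof -
    have c1: "continuous_on {0..t} (\<lambda>s. \<Phi> (u s))"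
    proof (rule continuous_on_compose2[OF prim_cont[OF fc] ucont, unfolded \<Phi>_def[symmetric]])
      show "u ` {0..t} \<subseteq> {X t..x}"
      proof
        fix w assume "w \<in> u ` {0..t}"
        then obtain s where s: "s \<in> {0..t}" "w = u s" by auto
        then show "w \<in> {X t..x}" using udec[of 0 s] udec[of s t] u0 ut
          by (cases "s = 0"; cases "s = t") auto
      qed
    qed
    have c2: "continuous_on {0..t} \<Gamma>"
    proof (cases "b = 0")
      case True then show ?thesis unfolding \<Gamma>_def[abs_def] by (auto intro!: continuous_intros cont_Y)
    next
      case False
      have "continuous_on {0..t} (\<lambda>s. ln (D s))"
      proof (rule continuous_on_ln[OF cont_D])
        show "\<forall>s\<in>{0..t}. D s \<noteq> 0" using Dp by (metis less_irrefl)
      qed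
      then have "continuous_on {0..t} (\<lambda>s. ln (D s) / b)"
        using False by (intro continuous_on_divide continuous_on_const) auto
      then show ?thesis unfolding \<Gamma>_def[abs_def] using False by simp
    qed
    show ?thesis unfolding h_def[abs_def] by (intro continuous_intros c1 c2)
  qed
  have "h t = h 0" by (rule DERIV_isconst_end[OF t hcont hder])
  moreover have "h t = 0" by (simp add: h_def \<Phi>_def ut \<Gamma>_def Yt Dt)
  moreover have "h 0 = \<Phi> x" by (simp add: h_def u0 \<Gamma>_def Y0 D0)
  ultimately have I0: "integral {X t..x} (fW b g) = 0" by (simp add: \<Phi>_def)
  have Xneg: "X t < 0"
  proof (rule ccontr)
    assume "\<not> X t < 0"
    then have "integral {X t..x} (fW b g) > 0"
      by (intro int_pos Xtx fc) (use Wpos in \<open>auto simp: fW_def\<close>)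
    then show False using I0 by simp
  qed
  show ?thesis unfolding partner_def using Xneg Wpos I0 by auto
qed


lemma ident:
  assumes t: "t > 0" and Dp: "\<And>s. s \<in> {0..t} \<Longrightarrow> D s > 0"
    and Wu: "\<And>s. s \<in> {0..t} \<Longrightarrow> Wq b g (u s) > 0"
    and Wlo: "\<And>v. v \<in> {lo..x} \<Longrightarrow> Wq b g v > 0"
    and ur: "\<And>s. s \<in> {0..t} \<Longrightarrow> u s \<in> {lo..x}"
    and ur2: "\<And>s. 0 < s \<Longrightarrow> s < t \<Longrightarrow> u s \<in> {lo<..<x}"
  shows "integral {lo..u t} (fW b g) + (if b = 0 then - Y t else ln (D t) / b) = integral {lo..x} (fW b g)"
proof -
  have ucont: "continuous_on {0..t} u"
  proof (rule u_cont)
    fix s assume "s \<in> {0..t}"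
    then show "D s \<noteq> 0" using Dp by (metis less_irrefl)
  qed
  have fc: "continuous_on {lo..x} (fW b g)" by (rule fW_cont) (use Wlo in auto)
  define \<Phi> where "\<Phi> v = integral {lo..v} (fW b g)" for v
  define \<Gamma> where "\<Gamma> s = (if b = 0 then - Y s else ln (D s) / b)" for s
  define h where "h s = \<Phi> (u s) + \<Gamma> s" for s
  have hder: "(h has_real_derivative 0) (at s)" if "0 < s" "s < t" for s
  proof -
    have Ds: "D s > 0" using Dp that by auto
    have d1: "((\<lambda>s. \<Phi> (u s)) has_real_derivative (fW b g (u s) * (- Wq b g (u s)))) (at s)"
      unfolding \<Phi>_def
      by (rule DERIV_chain2[OF prim_deriv[OF fc] u'[of s]]) (use ur2[OF that] Ds in auto)
    have d2: "(\<Gamma> has_real_derivative (u s)) (at s)"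
    proof (cases "b = 0")
      case True
      have "((\<lambda>s. - Y s) has_real_derivative (- (- X s + g * Y s))) (at s)"
        by (auto intro!: derivative_eq_intros Y')
      moreover have "- (- X s + g * Y s) = u s" unfolding u_def D_def V_def using True by simp
      ultimately show ?thesis unfolding \<Gamma>_def[abs_def] using True by simp
    next
      case False
      have "((\<lambda>s. ln (D s) / b) has_real_derivative (b * V s / D s / b)) (at s)"
        by (auto intro!: derivative_eq_intros D' simp: Ds)
      moreover have "b * V s / D s / b = u s" unfolding u_def using False by simp
      ultimately show ?thesis unfolding \<Gamma>_def[abs_def] using False by simp
    qed
    have "fW b g (u s) * (- Wq b g (u s)) + u s = 0"
      using Wu[of s] that unfolding fW_def by simp
    then show ?thesis unfolding h_def[abs_def] using DERIV_add[OF d1 d2] by simp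
  qed
  have hcont: "continuous_on {0..t} h"
  proof -
    have c1: "continuous_on {0..t} (\<lambda>s. \<Phi> (u s))"
    proof (rule continuous_on_compose2[OF prim_cont[OF fc] ucont, unfolded \<Phi>_def[symmetric]])
      show "u ` {0..t} \<subseteq> {lo..x}" using ur by auto
    qed
    have c2: "continuous_on {0..t} \<Gamma>"
    proof (cases "b = 0")
      case True then show ?thesis unfolding \<Gamma>_def[abs_def] by (auto intro!: continuous_intros cont_Y)
    next
      case False
      have "continuous_on {0..t} (\<lambda>s. ln (D s))"
      proof (rule continuous_on_ln[OF cont_D])
        show "\<forall>s\<in>{0..t}. D s \<noteq> 0" using Dp by (metis less_irrefl)
      qed
      then have "continuous_on {0..t} (\<lambda>s. ln (D s) / b)"
        using False by (intro continuous_on_divide continuous_on_const) auto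
      then show ?thesis unfolding \<Gamma>_def[abs_def] using False by simp
    qed
    show ?thesis unfolding h_def[abs_def] by (intro continuous_intros c1 c2)
  qed
  have "h t = h 0" by (rule DERIV_isconst_end[OF t hcont hder])
  moreover have "h 0 = \<Phi> x" by (simp add: h_def u_def V0 D0 \<Gamma>_def Y0)
  ultimately show ?thesis by (simp add: h_def \<Phi>_def \<Gamma>_def)
qed

end


lemma partner_unique:
  assumes x: "x > 0" and p: "partner b g x p" and q: "partner b g x q"
  shows "p = q"
proof (rule ccontr)
  assume "p \<noteq> q"
  then consider "p < q" | "q < p" by linarith
  then show False
  proof cases
    case 1
    have W: "Wq b g v > 0" if "v \<in> {p..x}" for v using p that unfolding partner_def by auto
    have fc: "continuous_on {p..x} (fW b g)" by (rule fW_cont) (use W in auto)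
    have "integral {p..x} (fW b g) = integral {p..q} (fW b g) + integral {q..x} (fW b g)"
      by (rule int_split[OF fc]) (use 1 q x in \<open>auto simp: partner_def\<close>)
    moreover have "integral {p..q} (fW b g) < 0"
    proof (rule int_neg[OF 1])
      show "continuous_on {p..q} (fW b g)" using fc by (rule continuous_on_subset) (use q x in \<open>auto simp: partner_def\<close>)
      fix v assume "p < v" "v < q"
      then show "fW b g v < 0" using W[of v] q x unfolding fW_def partner_def by (auto simp: divide_neg_pos)
    qed
    ultimately show False using p q unfolding partner_def by simp
  next
    case 2
    have W: "Wq b g v > 0" if "v \<in> {q..x}" for v using q that unfolding partner_def by auto
    have fc: "continuous_on {q..x} (fW b g)" by (rule fW_cont) (use W in auto)
    have "integral {q..x} (fW b g) = integral {q..p} (fW b g) + integral {p..x} (fW b g)"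
      by (rule int_split[OF fc]) (use 2 p x in \<open>auto simp: partner_def\<close>)
    moreover have "integral {q..p} (fW b g) < 0"
    proof (rule int_neg[OF 2])
      show "continuous_on {q..p} (fW b g)" using fc by (rule continuous_on_subset) (use p x in \<open>auto simp: partner_def\<close>)
      fix v assume "q < v" "v < p"
      then show "fW b g v < 0" using W[of v] p x unfolding fW_def partner_def by (auto simp: divide_neg_pos)
    qed
    ultimately show False using p q unfolding partner_def by simp
  qed
qed

lemma partner_mono:
  assumes y: "y > 0" and yz: "y < z" and p: "partner b g y p" and q: "partner b g z q"
  shows "q < p"
proof (rule ccontr)
  assume "\<not> q < p"
  then have pq: "p \<le> q" by simp
  have p0: "p < 0" and q0: "q < 0" using p q unfolding partner_def by auto
  have W: "Wq b g v > 0" if "v \<in> {p..z}" for v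
  proof (cases "v \<le> y")
    case True then show ?thesis using p that unfolding partner_def by auto
  next
    case False then show ?thesis using q that q0 y unfolding partner_def by auto
  qed
  have fc: "continuous_on {p..z} (fW b g)" by (rule fW_cont) (use W in auto)
  have "integral {p..z} (fW b g) = integral {p..y} (fW b g) + integral {y..z} (fW b g)"
    by (rule int_split[OF fc]) (use p0 yz y in auto)
  moreover have "integral {y..z} (fW b g) > 0"
  proof (rule int_pos[OF yz])
    show "continuous_on {y..z} (fW b g)" using fc by (rule continuous_on_subset) (use p0 y in auto)
    fix v assume "y < v" "v < z"
    then show "fW b g v > 0" using W[of v] p0 y unfolding fW_def by auto
  qed
  moreover have "integral {p..z} (fW b g) = integral {p..q} (fW b g) + integral {q..z} (fW b g)"
    by (rule int_split[OF fc]) (use pq q0 y yz in auto)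
  moreover have "integral {p..q} (fW b g) \<le> 0"
  proof (rule int_nonpos[OF pq])
    show "continuous_on {p..q} (fW b g)" using fc by (rule continuous_on_subset) (use q0 y yz in auto)
    fix v assume "p < v" "v < q"
    then show "fW b g v < 0" using W[of v] q0 y yz unfolding fW_def by (auto simp: divide_neg_pos)
  qed
  ultimately show False using p q unfolding partner_def by simp
qed


context zsol
begin

lemma return:
  assumes x: "x > 0" and q: "partner b g x q"
  shows "pi_ret b g x q"
proof -
  have q0: "q < 0" and Wq: "\<And>v. v \<in> {q..x} \<Longrightarrow> Wq b g v > 0" and Iq: "integral {q..x} (fW b g) = 0"
    using q unfolding partner_def by auto
  have W: "Wq b g x > 0" using Wq[of x] q0 x by simp
  have "- X 0 + g * Y 0 < 0" using x by (simp add: X0 Y0)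
  from DERIV_neg_dec_right[OF Y'[of 0] this]
  obtain d where d: "d > 0" "\<And>h. h > 0 \<Longrightarrow> h < d \<Longrightarrow> Y h < 0" by (auto simp: Y0)
  define \<delta> where "\<delta> = d / 2"
  have \<delta>: "\<delta> > 0" using d by (simp add: \<delta>_def)
  have Yneg1: "Y s < 0" if "0 < s" "s \<le> \<delta>" for s using d that by (simp add: \<delta>_def)
  obtain v0 where v0: "v0 \<in> {q..x}" "\<And>v. v \<in> {q..x} \<Longrightarrow> Wq b g v0 \<le> Wq b g v"
    using continuous_attains_inf[OF compact_Icc _ Wq_cont[of "{q..x}" b g]] q0 x by auto
  define m where "m = Wq b g v0"
  have m: "m > 0" using Wq[OF v0(1)] by (simp add: m_def)
  define T where "T = (x - q) / m + \<delta> + 1"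
  have T\<delta>: "\<delta> < T"
  proof -
    have "(x - q) / m > 0" using m q0 x by simp
    then show ?thesis by (simp add: T_def)
  qed
  have "\<exists>s\<in>{\<delta>..T}. Y s \<ge> 0"
  proof (rule ccontr)
    assume "\<not> ?thesis"
    then have Yn: "Y s < 0" if "s \<in> {\<delta>..T}" for s using that by (meson not_le)
    have Ylt: "Y s < 0" if "0 < s" "s \<le> T" for s
      using Yneg1[of s] Yn[of s] that by (cases "s \<le> \<delta>") auto
    have Yle: "Y s \<le> 0" if "s \<in> {0..T}" for s
      using Ylt[of s] that Y0 by (cases "s = 0") auto
    have Dp: "D s > 0" if "s \<in> {0..T}" for s using Dpos[OF W Yle that] .
    have Wu: "Wq b g (u s) > 0" if "s \<in> {0..T}" for s
    proof -
      have "P s > 0" unfolding P_exp using W by simp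
      moreover have "D s > 0" using Dp[OF that] .
      ultimately show ?thesis unfolding Wq_u[OF less_imp_neq[OF \<open>D s > 0\<close>, symmetric]] by simp
    qed
    have udec: "u s2 < u s1" if "0 \<le> s1" "s1 < s2" "s2 \<le> T" for s1 s2
    proof (rule DERIV_neg_imp_decreasing[OF that(2)])
      fix r assume "s1 \<le> r" "r \<le> s2"
      then have r: "r \<in> {0..T}" using that by simp
      show "\<exists>y. DERIV u r :> y \<and> y < 0"
        using u'[of r] Dp[OF r] Wu[OF r] by (intro exI[of _ "- Wq b g (u r)"]) simp
    qed
    have ucont: "continuous_on {0..T} u"
    proof (rule u_cont)
      fix s assume "s \<in> {0..T}"
      then show "D s \<noteq> 0" using Dp by (metis less_irrefl)
    qed
    have u0: "u 0 = x" by (simp add: u_def V0 D0)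
    have ule: "u s \<le> x" if "s \<in> {0..T}" for s
      using udec[of 0 s] that u0 by (cases "s = 0") auto
    have ugt: "u s > q" if s0: "s \<in> {0..T}" for s
    proof (rule ccontr)
      assume "\<not> u s > q"
      then have "u s \<le> q" by simp
      then obtain s1 where s1: "0 \<le> s1" "s1 \<le> s" "u s1 = q"
        using IVT2'[of u s q 0, OF _ _ _ continuous_on_subset[OF ucont]] s0 u0 q0 x by auto
      have s1p: "0 < s1" using s1 u0 q0 x by (cases "s1 = 0") auto
      have s1T: "s1 \<le> T" using s1 s0 by simp
      have "integral {q..u s1} (fW b g) + (if b = 0 then - Y s1 else ln (D s1) / b) = integral {q..x} (fW b g)"
      proof (rule ident[OF s1p])
        show "D s > 0" if "s \<in> {0..s1}" for s using Dp that s1T by simp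
        show "Wq b g (u s) > 0" if "s \<in> {0..s1}" for s using Wu that s1T by simp
        show "Wq b g v > 0" if "v \<in> {q..x}" for v using Wq that .
        show "u s \<in> {q..x}" if "s \<in> {0..s1}" for s
          using ule[of s] udec[of s s1] that s1 s1T by (cases "s = s1") auto
        show "u s \<in> {q<..<x}" if "0 < s" "s < s1" for s
          using udec[of 0 s] udec[of s s1] that s1 s1T u0 by auto
      qed
      then have G: "(if b = 0 then - Y s1 else ln (D s1) / b) = 0" using Iq s1 by simp
      have "Y s1 = 0"
      proof (cases "b = 0")
        case True then show ?thesis using G by simp
      next
        case False
        then have "ln (D s1) = 0" using G by simp
        then have "D s1 = 1" using Dp[of s1] s1T s1p by simp
        then show ?thesis using False by (simp add: D_def)
      qed
      then show False using Ylt[OF s1p s1T] by simp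
    qed
    have "\<exists>l z. 0 < z \<and> z < T \<and> DERIV u z :> l \<and> u T - u 0 = (T - 0) * l"
    proof (rule MVT)
      show "0 < T" using T\<delta> \<delta> by simp
      show "continuous_on {0..T} u" by (rule ucont)
      show "u differentiable (at r)" if "0 < r" "r < T" for r
        using u'[of r] Dp[of r] that real_differentiable_def by force
    qed
    then obtain l z where z: "0 < z" "z < T" "DERIV u z :> l" "u T - u 0 = (T - 0) * l" by blast
    have zT: "z \<in> {0..T}" using z by simp
    have l: "l = - Wq b g (u z)" using DERIV_unique[OF z(3) u'[of z]] Dp[OF zT] by simp
    have "Wq b g (u z) \<ge> m" unfolding m_def using v0(2)[of "u z"] ugt[OF zT] ule[OF zT] by simp
    then have "u T \<le> x - T * m" using z(4) l u0 T\<delta> \<delta>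
      by (simp add: algebra_simps) (smt (verit) mult_left_mono)
    moreover have "T * m = (x - q) + (\<delta> + 1) * m" using m by (simp add: T_def field_simps)
    ultimately have "u T < q" using m \<delta> by (smt (verit) mult_pos_pos)
    then show False using ugt[of T] T\<delta> \<delta> by simp
  qed
  then obtain s' where s': "s' \<in> {\<delta>..T}" "Y s' \<ge> 0" by blast
  have Y\<delta>: "Y \<delta> < 0" using Yneg1[OF \<delta>] by simp
  define Z where "Z = {\<delta>..s'} \<inter> Y -` {0}"
  have Zc: "closed Z" unfolding Z_def by (rule continuous_closed_preimage[OF cont_Y]) auto
  have Zne: "Z \<noteq> {}"
  proof -
    obtain z where "\<delta> \<le> z" "z \<le> s'" "Y z = 0" using IVT'[of Y \<delta> 0 s', OF _ _ _ cont_Y] Y\<delta> s' by auto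
    then show ?thesis unfolding Z_def by auto
  qed
  have Zb: "bdd_below Z" unfolding Z_def by (rule bdd_belowI[of _ \<delta>]) auto
  define t' where "t' = Inf Z"
  have t'Z: "t' \<in> Z" unfolding t'_def by (rule closed_contains_Inf[OF Zne Zb Zc])
  have Yt': "Y t' = 0" and t'r: "\<delta> \<le> t'" "t' \<le> s'" using t'Z unfolding Z_def by auto
  have t'p: "t' > 0" using t'r \<delta> by simp
  have neg: "Y s < 0" if "s \<in> {0<..<t'}" for s
  proof (cases "s \<le> \<delta>")
    case True then show ?thesis using Yneg1 that by auto
  next
    case False
    show ?thesis
    proof (rule ccontr)
      assume "\<not> Y s < 0"
      then obtain z where z: "\<delta> \<le> z" "z \<le> s" "Y z = 0"
        using IVT'[of Y \<delta> 0 s, OF _ _ _ cont_Y] Y\<delta> False by auto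
      then have "z \<in> Z" unfolding Z_def using that t'r by auto
      then have "t' \<le> z" unfolding t'_def by (rule cInf_lower[OF _ Zb])
      then show False using z that by auto
    qed
  qed
  have "partner b g x (X t')" by (rule core[OF x t'p neg Yt'])
  then have Xt': "X t' = q" using partner_unique[OF x _ q] by blast
  show ?thesis unfolding pi_ret_def
  proof (intro exI conjI)
    show "t' > 0" by (rule t'p)
    show "p 0 = (x, 0)" by (rule init)
    show "\<forall>s. (p has_vector_derivative Zm b g (p s)) (at s)" using der by blast
    show "\<forall>s\<in>{0<..<t'}. snd (p s) < 0" using neg unfolding Y_def by blast
    show "p t' = (q, 0)" using Xt' Yt' unfolding X_def Y_def by (simp add: prod_eq_iff)
  qed
qed

end

lemma shift_sol:
  assumes "zsol b g x p" and pt: "p t = (r, 0)" and rx: "r \<noteq> x"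
  shows "zsol b g x' (\<lambda>s. p s + ((x' - x) / (r - x)) *\<^sub>R (p (s + t) - p s))"
proof
  interpret zsol b g x p by fact
  define \<beta> where "\<beta> = (x' - x) / (r - x)"
  fix s
  have d2: "((\<lambda>s. p (s + t)) has_vector_derivative Zm b g (p (s + t))) (at s)"
  proof -
    have "((p \<circ> (\<lambda>s. s + t)) has_vector_derivative (1 *\<^sub>R Zm b g (p (s + t)))) (at s)"
      by (rule vector_diff_chain_at) (auto intro!: derivative_eq_intros der)
    then show ?thesis by (simp add: o_def)
  qed
  have "((\<lambda>s. p s + \<beta> *\<^sub>R (p (s + t) - p s)) has_vector_derivative
        Zm b g (p s) + \<beta> *\<^sub>R (Zm b g (p (s + t)) - Zm b g (p s))) (at s)"
  proof (rule has_vector_derivative_add[OF der])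
    have "((\<lambda>s. \<beta> *\<^sub>R (p (s + t) - p s)) has_vector_derivative
       (\<beta> *\<^sub>R (Zm b g (p (s + t)) - Zm b g (p s)) + 0 *\<^sub>R (p (s + t) - p s))) (at s)"
      by (rule has_vector_derivative_scaleR[OF DERIV_const has_vector_derivative_diff[OF d2 der]])
    then show "((\<lambda>s. \<beta> *\<^sub>R (p (s + t) - p s)) has_vector_derivative
       (\<beta> *\<^sub>R (Zm b g (p (s + t)) - Zm b g (p s)))) (at s)" by simp
  qed
  moreover have "Zm b g (p s) + \<beta> *\<^sub>R (Zm b g (p (s + t)) - Zm b g (p s)) =
     Zm b g (p s + \<beta> *\<^sub>R (p (s + t) - p s))"
    by (simp add: Zm_def algebra_simps)
  ultimately show "((\<lambda>s. p s + ((x' - x) / (r - x)) *\<^sub>R (p (s + t) - p s)) has_vector_derivative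
       Zm b g (p s + ((x' - x) / (r - x)) *\<^sub>R (p (s + t) - p s))) (at s)" by (simp add: \<beta>_def)
next
  interpret zsol b g x p by fact
  show "p 0 + ((x' - x) / (r - x)) *\<^sub>R (p (0 + t) - p 0) = (x', 0)"
    using init pt rx by (simp add: field_simps)
qed


lemma pi_ret_partner:
  assumes x: "x > 0" and pr: "pi_ret b g x q"
  shows "partner b g x q"
proof -
  obtain p t where t: "t > 0" "p 0 = (x, 0)" "\<forall>s. (p has_vector_derivative Zm b g (p s)) (at s)"
     "\<forall>s\<in>{0<..<t}. snd (p s) < 0" "p t = (q, 0)"
    using pr unfolding pi_ret_def by blast
  interpret zsol b g x p using t by unfold_locales auto
  have "partner b g x (X t)" by (rule core[OF x t(1)]) (use t in \<open>auto simp: Y_def\<close>)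
  moreover have "X t = q" using t by (simp add: X_def)
  ultimately show ?thesis by simp
qed

lemma partner_pi_ret:
  assumes pr0: "pi_ret b g x0 r0" and x0: "x0 > 0" and x: "x > 0" and q: "partner b g x q"
  shows "pi_ret b g x q"
proof -
  obtain p t where t: "t > 0" "p 0 = (x0, 0)" "\<forall>s. (p has_vector_derivative Zm b g (p s)) (at s)"
     "\<forall>s\<in>{0<..<t}. snd (p s) < 0" "p t = (r0, 0)"
    using pr0 unfolding pi_ret_def by blast
  have z0: "zsol b g x0 p" using t by unfold_locales auto
  have "r0 < 0" using pi_ret_partner[OF x0 pr0] unfolding partner_def by simp
  then have "r0 \<noteq> x0" using x0 by simp
  from shift_sol[OF z0 t(5) this, of x]
  interpret zsol b g x "\<lambda>s. p s + ((x - x0) / (r0 - x0)) *\<^sub>R (p (s + t) - p s)" .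
  show ?thesis by (rule return[OF x q])
qed

lemma Pi_map_eq:
  assumes x: "x > 0" and pr: "pi_ret b g x q"
  shows "Pi_map b g x = q"
proof -
  have "(THE u. pi_ret b g x u) = q"
  proof (rule the_equality)
    show "pi_ret b g x q" by (rule pr)
  next
    fix u assume "pi_ret b g x u"
    then show "u = q" using partner_unique[OF x pi_ret_partner[OF x] pi_ret_partner[OF x pr]] by blast
  qed
  then show ?thesis using x by (simp add: Pi_map_def)
qed

lemma O_facts:
  assumes "y \<in> open_int B ap dp bm gm"
  shows "y > 0" "pi_ret bm gm y (Pi_map bm gm y)" "partner bm gm y (Pi_map bm gm y)"
    "\<And>v. v \<in> {Pi_map bm gm y..y} \<Longrightarrow> Xsl B ap dp v > 0"
proof -
  show y: "y > 0" using assms by (simp add: open_int_def)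
  have g: "y \<in> good_set B ap dp bm gm" using assms y by (auto simp: open_int_def)
  then obtain u where "pi_ret bm gm y u" using y by (auto simp: good_set_def Pi_dom_def)
  then show pr: "pi_ret bm gm y (Pi_map bm gm y)" using Pi_map_eq[OF y] by simp
  show "partner bm gm y (Pi_map bm gm y)" by (rule pi_ret_partner[OF y pr])
  show "\<And>v. v \<in> {Pi_map bm gm y..y} \<Longrightarrow> Xsl B ap dp v > 0" using g by (auto simp: good_set_def)
qed

lemma O_down:
  assumes "z \<in> open_int B ap dp bm gm" "0 < y" "y \<le> z"
  shows "y \<in> open_int B ap dp bm gm"
  using assms by (auto simp: open_int_def)

lemma ext_pos:
  fixes f :: "real \<Rightarrow> real"
  assumes ca: "isCont f a" and cb: "isCont f b" and pos: "\<And>v. v \<in> {a..b} \<Longrightarrow> f v > 0" and ab: "a \<le> b"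
  shows "\<exists>\<epsilon>>0. \<forall>v\<in>{a-\<epsilon>..b+\<epsilon>}. f v > 0"
proof -
  have "eventually (\<lambda>v. f v > 0) (at a)"
    using order_tendstoD(1)[OF ca[unfolded isCont_def]] pos[of a] ab by auto
  then obtain d1 where d1: "d1 > 0" "\<And>v. v \<noteq> a \<Longrightarrow> dist v a < d1 \<Longrightarrow> f v > 0"
    unfolding eventually_at by auto
  have "eventually (\<lambda>v. f v > 0) (at b)"
    using order_tendstoD(1)[OF cb[unfolded isCont_def]] pos[of b] ab by auto
  then obtain d2 where d2: "d2 > 0" "\<And>v. v \<noteq> b \<Longrightarrow> dist v b < d2 \<Longrightarrow> f v > 0"
    unfolding eventually_at by auto
  define \<epsilon> where "\<epsilon> = min d1 d2 / 2"
  have epos: "\<epsilon> > 0" using d1 d2 by (simp add: \<epsilon>_def)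
  have e1: "\<epsilon> < d1" and e2: "\<epsilon> < d2" using d1 d2 by (auto simp: \<epsilon>_def min_def)
  have "f v > 0" if v: "v \<in> {a-\<epsilon>..b+\<epsilon>}" for v
  proof -
    consider "v \<in> {a..b}" | "v < a" | "v > b" by force
    then show ?thesis
    proof cases
      case 1 then show ?thesis by (rule pos)
    next
      case 2
      then have "dist v a < d1" using v e1 by (simp add: dist_real_def)
      then show ?thesis using d1 2 by force
    next
      case 3
      then have "dist v b < d2" using v e2 by (simp add: dist_real_def)
      then show ?thesis using d2 3 by force
    qed
  qed
  then show ?thesis using epos by blast
qed

lemma inv_deriv:
  fixes f g :: "real \<Rightarrow> real"
  assumes "open S" "x \<in> S" "continuous_on S f" "\<And>z. z \<in> S \<Longrightarrow> g (f z) = z" "DERIV f x :> D" "D \<noteq> 0"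
  shows "DERIV g (f x) :> inverse D"
  unfolding has_field_derivative_def
  by (rule has_derivative_inverse_strong[OF assms(1-4)])
     (use assms(5,6) in \<open>auto simp: has_field_derivative_def fun_eq_iff\<close>)

definition psi :: "real \<Rightarrow> real \<Rightarrow> real \<Rightarrow> real \<Rightarrow> real \<Rightarrow> real \<Rightarrow> real" where
  "psi B ap dp bm gm x = integral {Pi_map bm gm x..x} (\<lambda>u. u / Xsl B ap dp u)"

lemma Xsl_cont: "1 + dp \<noteq> 0 \<Longrightarrow> isCont (Xsl B ap dp) v"
  unfolding Xsl_def[abs_def] by (intro continuous_intros)

lemma local_deriv:
  assumes Bd: "B > dp" "dp > 0" and xO: "x \<in> open_int B ap dp bm gm"
  defines "r \<equiv> Pi_map bm gm x"
  shows "DERIV (Pi_map bm gm) x :> x * Wq bm gm r / (r * Wq bm gm x) \<and>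
    DERIV (psi B ap dp bm gm) x :> x / Xsl B ap dp x - r / Xsl B ap dp r * (x * Wq bm gm r / (r * Wq bm gm x))"
proof -
  note xf = O_facts[OF xO, folded r_def]
  have dpnz: "1 + dp \<noteq> 0" using Bd by simp
  have x: "x > 0" by (rule xf(1))
  have r0: "r < 0" and Wr: "\<And>v. v \<in> {r..x} \<Longrightarrow> Wq bm gm v > 0" and Ir: "integral {r..x} (fW bm gm) = 0"
    using xf(3) unfolding partner_def by auto
  define F where "F v = min (Wq bm gm v) (Xsl B ap dp v)" for v
  have Fc: "isCont F v" for v unfolding F_def[abs_def] by (intro continuous_intros isCont_Wq Xsl_cont[OF dpnz])
  obtain \<epsilon> where \<epsilon>: "\<epsilon> > 0" "\<And>v. v \<in> {r-\<epsilon>..x+\<epsilon>} \<Longrightarrow> F v > 0"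
    using ext_pos[OF Fc Fc, of r x] Wr xf(4) r0 x unfolding F_def by force
  define lo where "lo = r - \<epsilon>"
  define hi where "hi = x + \<epsilon>"
  have Wp: "Wq bm gm v > 0" if "v \<in> {lo..hi}" for v using \<epsilon>(2)[of v] that by (simp add: F_def lo_def hi_def)
  have Xp: "Xsl B ap dp v > 0" if "v \<in> {lo..hi}" for v using \<epsilon>(2)[of v] that by (simp add: F_def lo_def hi_def)
  have lor: "lo < r" and xhi: "x < hi" using \<epsilon> by (auto simp: lo_def hi_def)
  have fc: "continuous_on {lo..hi} (fW bm gm)" by (rule fW_cont) (use Wp in auto)
  define hh where "hh u = u / Xsl B ap dp u" for u
  have hc: "continuous_on {lo..hi} hh"
    unfolding hh_def by (intro continuous_intros continuous_at_imp_continuous_on ballI Xsl_cont[OF dpnz])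
      (use Xp in force)
  define \<Phi> where "\<Phi> v = integral {lo..v} (fW bm gm)" for v
  have \<Phi>split: "\<Phi> w = \<Phi> v + integral {v..w} (fW bm gm)" if "lo \<le> v" "v \<le> w" "w \<le> hi" for v w
    unfolding \<Phi>_def by (rule int_split[OF continuous_on_subset[OF fc]]) (use that in auto)
  have \<Phi>dec: "\<Phi> w < \<Phi> v" if "lo \<le> v" "v < w" "w \<le> 0" for v w
  proof -
    have "integral {v..w} (fW bm gm) < 0"
    proof (rule int_neg[OF that(2) continuous_on_subset[OF fc]])
      show "{v..w} \<subseteq> {lo..hi}" using that x xhi by auto
      fix z assume "v < z" "z < w"
      then show "fW bm gm z < 0" using Wp[of z] that x xhi unfolding fW_def by (auto simp: divide_neg_pos)
    qed
    then show ?thesis using \<Phi>split[of v w] that x xhi by simp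
  qed
  have \<Phi>inc: "\<Phi> v < \<Phi> w" if "0 \<le> v" "v < w" "w \<le> hi" for v w
  proof -
    have "integral {v..w} (fW bm gm) > 0"
    proof (rule int_pos[OF that(2) continuous_on_subset[OF fc]])
      show "{v..w} \<subseteq> {lo..hi}" using that r0 lor by auto
      fix z assume "v < z" "z < w"
      then show "fW bm gm z > 0" using Wp[of z] that r0 lor unfolding fW_def by auto
    qed
    then show ?thesis using \<Phi>split[of v w] that r0 lor by simp
  qed
  have \<Phi>cont: "continuous_on {lo..hi} \<Phi>" unfolding \<Phi>_def by (rule prim_cont[OF fc])
  have \<Phi>der: "DERIV \<Phi> v :> fW bm gm v" if "lo < v" "v < hi" for v
    unfolding \<Phi>_def by (rule prim_deriv[OF fc that])
  have \<Phi>x: "\<Phi> x = \<Phi> r" using \<Phi>split[of r x] Ir lor x r0 xhi by simp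
  have \<Phi>lo: "\<Phi> lo = 0" by (simp add: \<Phi>_def)
  have \<Phi>r: "\<Phi> r < 0" using \<Phi>dec[of lo r] lor r0 \<Phi>lo by simp
  have "isCont \<Phi> x" using \<Phi>der[of x] lor r0 x xhi DERIV_isCont by force
  then have "eventually (\<lambda>y. \<Phi> y < 0) (at x)"
    using order_tendstoD(2)[of \<Phi> "\<Phi> x" "at x" 0] \<Phi>x \<Phi>r by (auto simp: isCont_def)
  then obtain \<delta>1 where \<delta>1: "\<delta>1 > 0" "\<And>y. y \<noteq> x \<Longrightarrow> dist y x < \<delta>1 \<Longrightarrow> \<Phi> y < 0"
    unfolding eventually_at by auto
  define \<delta> where "\<delta> = min \<delta>1 (min x \<epsilon>)"
  have \<delta>: "\<delta> > 0" using \<delta>1 x \<epsilon> by (simp add: \<delta>_def)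
  have key: "0 < y \<and> y < hi \<and> Pi_map bm gm y \<in> {lo<..<0} \<and> \<Phi> (Pi_map bm gm y) = \<Phi> y"
    if y: "y \<in> ball x \<delta>" for y
  proof -
    have y0: "0 < y" and yhi: "y < hi" using y by (auto simp: \<delta>_def hi_def dist_real_def)
    have \<Phi>y: "\<Phi> y < 0"
      using \<delta>1(2)[of y] y \<Phi>x \<Phi>r by (cases "y = x") (auto simp: \<delta>_def dist_commute)
    have \<Phi>0y: "\<Phi> 0 < \<Phi> y" using \<Phi>inc[of 0 y] y0 yhi by simp
    obtain q where q: "lo \<le> q" "q \<le> 0" "\<Phi> q = \<Phi> y"
      using IVT2'[of \<Phi> 0 "\<Phi> y" lo, OF _ _ _ continuous_on_subset[OF \<Phi>cont]] \<Phi>0y \<Phi>y \<Phi>lo lor r0 x xhi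
      by auto
    have qlo: "q \<noteq> lo" using q \<Phi>y \<Phi>lo by auto
    have q0: "q \<noteq> 0" using q \<Phi>0y by auto
    have "partner bm gm y q" unfolding partner_def
    proof (intro conjI ballI)
      show "q < 0" using q q0 by simp
      show "Wq bm gm v > 0" if "v \<in> {q..y}" for v using Wp[of v] that q yhi by auto
      show "integral {q..y} (fW bm gm) = 0" using \<Phi>split[of q y] q y0 yhi by simp
    qed
    then have "pi_ret bm gm y q" by (rule partner_pi_ret[OF xf(2) x y0])
    then have "Pi_map bm gm y = q" by (rule Pi_map_eq[OF y0])
    then show ?thesis using q qlo q0 y0 yhi by auto
  qed
  define ginv where "ginv w = (THE q. q \<in> {lo<..<0} \<and> \<Phi> q = w)" for w
  have ginv: "ginv (\<Phi> z) = z" if z: "z \<in> {lo<..<0}" for z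
    unfolding ginv_def
  proof (rule the_equality)
    show "z \<in> {lo<..<0} \<and> \<Phi> z = \<Phi> z" using z by simp
    fix q assume q: "q \<in> {lo<..<0} \<and> \<Phi> q = \<Phi> z"
    show "q = z"
    proof (rule ccontr)
      assume "q \<noteq> z"
      then consider "q < z" | "z < q" by linarith
      then show False using \<Phi>dec[of q z] \<Phi>dec[of z q] q z by cases auto
    qed
  qed
  have fWr: "fW bm gm r \<noteq> 0" using Wr[of r] r0 x unfolding fW_def by simp
  have dg: "DERIV ginv (\<Phi> r) :> inverse (fW bm gm r)"
  proof (rule inv_deriv[where g=ginv and f=\<Phi> and S="{lo<..<0}"])
    show "fW bm gm r \<noteq> 0" by (rule fWr)
    show "ginv (\<Phi> z) = z" if "z \<in> {lo<..<0}" for z using ginv that .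
    show "open {lo<..<0::real}" by simp
    show "r \<in> {lo<..<0}" using lor r0 by simp
    show "continuous_on {lo<..<0} \<Phi>" using \<Phi>cont by (rule continuous_on_subset) (use x xhi in auto)
    show "DERIV \<Phi> r :> fW bm gm r" using \<Phi>der[of r] lor r0 x xhi by simp
  qed
  have dgc: "DERIV (\<lambda>y. ginv (\<Phi> y)) x :> inverse (fW bm gm r) * fW bm gm x"
    by (rule DERIV_chain2[OF _ \<Phi>der]) (use dg \<Phi>x lor r0 x xhi in auto)
  have eqP: "ginv (\<Phi> y) = Pi_map bm gm y" if "y \<in> ball x \<delta>" for y
    using key[OF that] ginv by metis
  have dP: "DERIV (Pi_map bm gm) x :> inverse (fW bm gm r) * fW bm gm x"
    by (rule has_field_derivative_transform_within_open[OF dgc, of "ball x \<delta>"]) (use \<delta> eqP in auto)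
  have Wx: "Wq bm gm x > 0" using Wr[of x] r0 x by simp
  have Wr': "Wq bm gm r > 0" using Wr[of r] r0 x by simp
  have PiD: "inverse (fW bm gm r) * fW bm gm x = x * Wq bm gm r / (r * Wq bm gm x)"
    unfolding fW_def using r0 Wx Wr' by (simp add: field_simps)
  define G where "G v = integral {lo..v} hh" for v
  have Gder: "DERIV G v :> hh v" if "lo < v" "v < hi" for v
    unfolding G_def by (rule prim_deriv[OF hc that])
  have rx: "Pi_map bm gm x = r" by (simp add: r_def)
  have dG: "DERIV (\<lambda>y. G y - G (Pi_map bm gm y)) x :> hh x - hh r * (inverse (fW bm gm r) * fW bm gm x)"
  proof (rule DERIV_diff[OF Gder])
    show "DERIV (\<lambda>y. G (Pi_map bm gm y)) x :> hh r * (inverse (fW bm gm r) * fW bm gm x)"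
      by (rule DERIV_chain2[OF _ dP]) (use Gder[of r] lor r0 x xhi rx in auto)
  qed (use lor r0 x xhi in auto)
  have eqpsi: "G y - G (Pi_map bm gm y) = psi B ap dp bm gm y" if "y \<in> ball x \<delta>" for y
  proof -
    have k: "0 < y" "y < hi" "Pi_map bm gm y \<in> {lo<..<0}" using key[OF that] by auto
    have "G y = G (Pi_map bm gm y) + integral {Pi_map bm gm y..y} hh"
      unfolding G_def by (rule int_split[OF continuous_on_subset[OF hc]]) (use k in auto)
    then show ?thesis unfolding psi_def hh_def[abs_def] by simp
  qed
  have dpsi: "DERIV (psi B ap dp bm gm) x :> hh x - hh r * (inverse (fW bm gm r) * fW bm gm x)"
    by (rule has_field_derivative_transform_within_open[OF dG, of "ball x \<delta>"]) (use \<delta> eqpsi in auto)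
  show ?thesis using dP dpsi unfolding PiD hh_def by simp
qed


definition Xl :: "real \<Rightarrow> real \<Rightarrow> real \<Rightarrow> real \<Rightarrow> real" where
  "Xl B ap dp u = B - dp + ap * u"

definition ell :: "real \<Rightarrow> real \<Rightarrow> real \<Rightarrow> real \<Rightarrow> real \<Rightarrow> real \<Rightarrow> real" where
  "ell B ap dp bm gm y = ap * bm * y * Pi_map bm gm y + bm * (B - dp) * (y + Pi_map bm gm y) - (ap + (B - dp) * gm)"

lemma Xsl_Xl: "Xsl B ap dp u = Xl B ap dp u / (1 + dp)"
  by (simp add: Xsl_def Xl_def)

lemma WX_identity:
  "Wq b g y * Xl B a dp r - Wq b g r * Xl B a dp y =
     (y - r) * (a * b * y * r + b * (B - dp) * (y + r) - (a + (B - dp) * g))"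
  unfolding Wq_def Xl_def power2_eq_square by algebra

lemma psi_deriv_C:
  assumes Bd: "B > dp" "dp > 0" and xO: "x \<in> open_int B ap dp bm gm"
  shows "\<exists>C>0. DERIV (psi B ap dp bm gm) x :> C * ell B ap dp bm gm x"
proof -
  define r where "r = Pi_map bm gm x"
  note xf = O_facts[OF xO, folded r_def]
  have x: "x > 0" by (rule xf(1))
  have r0: "r < 0" and Wr: "\<And>v. v \<in> {r..x} \<Longrightarrow> Wq bm gm v > 0"
    using xf(3) unfolding partner_def by auto
  have Wx: "Wq bm gm x > 0" and Wr': "Wq bm gm r > 0" using Wr[of x] Wr[of r] r0 x by auto
  have Xx: "Xl B ap dp x > 0" and Xr: "Xl B ap dp r > 0"
    using xf(4)[of x] xf(4)[of r] r0 x Bd by (auto simp: Xsl_Xl divide_pos_pos zero_less_divide_iff)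
  define C where "C = (1 + dp) * x * (x - r) / (Xl B ap dp x * Xl B ap dp r * Wq bm gm x)"
  have C: "C > 0" unfolding C_def using Bd x r0 Xx Xr Wx by (intro divide_pos_pos mult_pos_pos) auto
  have "x / Xsl B ap dp x - r / Xsl B ap dp r * (x * Wq bm gm r / (r * Wq bm gm x)) =
        (1 + dp) * x * (Wq bm gm x * Xl B ap dp r - Wq bm gm r * Xl B ap dp x) / (Xl B ap dp x * Xl B ap dp r * Wq bm gm x)"
    unfolding Xsl_Xl using Bd x r0 Xx Xr Wx Wr' by (simp add: field_simps)
  also have "\<dots> = C * ell B ap dp bm gm x"
    unfolding WX_identity C_def ell_def r_def[symmetric] by (simp add: field_simps)
  finally show ?thesis using local_deriv[OF Bd xO] C unfolding r_def by auto
qed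

lemma ell_deriv:
  assumes Bd: "B > dp" "dp > 0" and xO: "x \<in> open_int B ap dp bm gm"
  defines "r \<equiv> Pi_map bm gm x"
  defines "P' \<equiv> x * Wq bm gm r / (r * Wq bm gm x)"
  shows "DERIV (ell B ap dp bm gm) x :> ap * bm * (r + x * P') + bm * (B - dp) * (1 + P')"
proof -
  have dP: "DERIV (Pi_map bm gm) x :> P'" using local_deriv[OF Bd xO] unfolding P'_def r_def by auto
  have rr: "Pi_map bm gm x = r" by (simp add: r_def)
  show ?thesis unfolding ell_def[abs_def] by (auto intro!: derivative_eq_intros dP simp: rr algebra_simps)
qed

lemma transversal:
  fixes f f' :: "real \<Rightarrow> real"
  assumes ab: "a < b" and der: "\<And>s. s \<in> {a..b} \<Longrightarrow> DERIV f s :> f' s"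
    and pos: "\<And>s. s \<in> {a..b} \<Longrightarrow> f s = 0 \<Longrightarrow> f' s > 0" and fa: "f a = 0" and fb: "f b = 0"
  shows False
proof -
  have cont: "continuous_on {a..b} f"
    by (rule continuous_at_imp_continuous_on) (use der DERIV_isCont in blast)
  obtain d1 where d1: "d1 > 0" "\<And>h. h > 0 \<Longrightarrow> h < d1 \<Longrightarrow> f a < f (a + h)"
    using DERIV_pos_inc_right[OF der[of a] pos[of a]] ab fa by auto
  obtain d2 where d2: "d2 > 0" "\<And>h. h > 0 \<Longrightarrow> h < d2 \<Longrightarrow> f (b - h) < f b"
    using DERIV_pos_inc_left[OF der[of b] pos[of b]] ab fb by auto
  define m where "m = min (min d1 d2) ((b - a) / 2)"
  have m: "m > 0" "m \<le> d1" "m \<le> d2" "m \<le> (b - a) / 2"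
  proof -
    show "m > 0" using d1 d2 ab unfolding m_def by simp
    show "m \<le> d1" unfolding m_def by (meson min.cobounded1 order_trans)
    show "m \<le> d2" unfolding m_def by (meson min.cobounded1 min.cobounded2 order_trans)
    show "m \<le> (b - a) / 2" unfolding m_def by (rule min.cobounded2)
  qed
  define h where "h = m / 2"
  have h: "h > 0" "h < d1" "h < d2" "a + h < b - h" using m by (auto simp: h_def)
  define s1 where "s1 = a + h"
  define s2 where "s2 = b - h"
  have fs1: "f s1 > 0" using d1(2)[of h] h fa by (simp add: s1_def)
  have fs2: "f s2 < 0" using d2(2)[of h] h fb by (simp add: s2_def)
  have s12: "s1 < s2" "a < s1" "s2 < b" using h by (auto simp: s1_def s2_def)
  define Z where "Z = {s1..s2} \<inter> f -` {0}"
  have Zc: "closed Z" unfolding Z_def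
    by (rule continuous_closed_preimage[OF continuous_on_subset[OF cont]]) (use s12 in auto)
  have Zne: "Z \<noteq> {}"
  proof -
    obtain z where "s1 \<le> z" "z \<le> s2" "f z = 0"
      using IVT2'[of f s2 0 s1, OF _ _ _ continuous_on_subset[OF cont]] fs1 fs2 s12 by auto
    then show ?thesis unfolding Z_def by auto
  qed
  have Zb: "bdd_below Z" unfolding Z_def by (rule bdd_belowI[of _ s1]) auto
  define z where "z = Inf Z"
  have zZ: "z \<in> Z" unfolding z_def by (rule closed_contains_Inf[OF Zne Zb Zc])
  then have fz: "f z = 0" and zr: "s1 \<le> z" "z \<le> s2" unfolding Z_def by auto
  have zs1: "s1 < z" using zr fz fs1 by (cases "z = s1") auto
  have posleft: "f w > 0" if w: "s1 \<le> w" "w < z" for w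
  proof (rule ccontr)
    assume "\<not> f w > 0"
    then obtain v where v: "s1 \<le> v" "v \<le> w" "f v = 0"
      using IVT2'[of f w 0 s1, OF _ _ _ continuous_on_subset[OF cont]] fs1 w s12 zr by auto
    then have "v \<in> Z" unfolding Z_def using w zr by auto
    then have "z \<le> v" unfolding z_def by (rule cInf_lower[OF _ Zb])
    then show False using v w by simp
  qed
  obtain d3 where d3: "d3 > 0" "\<And>k. k > 0 \<Longrightarrow> k < d3 \<Longrightarrow> f (z - k) < f z"
    using DERIV_pos_inc_left[OF der[of z] pos[of z]] zr s12 fz by auto
  obtain mm where mm: "mm > 0" "mm \<le> d3" "mm \<le> z - s1"
    using d3 zs1 by (intro that[of "min d3 (z - s1)"]) auto
  define k where "k = mm / 2"
  have k: "k > 0" "k < d3" "z - k \<ge> s1" using mm unfolding k_def by linarith+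
  have "f (z - k) < 0" using d3(2)[OF k(1,2)] fz by simp
  moreover have "f (z - k) > 0" using posleft[of "z - k"] k by simp
  ultimately show False by simp
qed


lemma sym_F:
  fixes f :: "real \<Rightarrow> real"
  assumes y: "y > 0" and fc: "continuous_on {-y..y} f"
  defines "F \<equiv> \<lambda>s. integral {-y..s} f - integral {-y..-s} f"
  shows "continuous_on {0..y} F" "F 0 = 0" "F y = integral {-y..y} f"
    "\<And>s. 0 < s \<Longrightarrow> s < y \<Longrightarrow> DERIV F s :> f s + f (-s)"
proof -
  have pc: "continuous_on {-y..y} (\<lambda>v. integral {-y..v} f)" by (rule prim_cont[OF fc])
  have c1: "continuous_on {0..y} (\<lambda>s. integral {-y..s} f)"
    by (rule continuous_on_subset[OF pc]) (use y in auto)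
  have c2: "continuous_on {0..y} (\<lambda>s. integral {-y..-s} f)"
    by (rule continuous_on_compose2[OF pc]) (auto intro!: continuous_intros)
  show "continuous_on {0..y} F" unfolding F_def by (intro continuous_intros c1 c2)
  show "F 0 = 0" by (simp add: F_def)
  show "F y = integral {-y..y} f" by (simp add: F_def)
  fix s assume s: "0 < s" "s < y"
  have d1: "DERIV (\<lambda>v. integral {-y..v} f) s :> f s" by (rule prim_deriv[OF fc]) (use s in auto)
  have d2: "DERIV (\<lambda>v. integral {-y..v} f) (-s) :> f (-s)" by (rule prim_deriv[OF fc]) (use s in auto)
  have d3: "DERIV (\<lambda>s. integral {-y..-s} f) s :> f (-s) * (-1)"
  proof -
    have du: "(uminus has_real_derivative -1) (at s within UNIV)" by (auto intro!: derivative_eq_intros)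
    show ?thesis using DERIV_chain2[where f="\<lambda>v. integral {-y..v} f" and g=uminus and x=s and Da="f (-s)" and Db="-1" and s=UNIV, OF d2 du] by simp
  qed
  show "DERIV F s :> f s + f (-s)" unfolding F_def using DERIV_diff[OF d1 d3] by simp
qed

lemma sym_sign:
  assumes y: "y > 0" and W: "\<And>v. v \<in> {-y..y} \<Longrightarrow> Wq b g v > 0"
  shows "(g > 0 \<longrightarrow> integral {-y..y} (fW b g) > 0) \<and> (g < 0 \<longrightarrow> integral {-y..y} (fW b g) < 0)
     \<and> (g = 0 \<longrightarrow> integral {-y..y} (fW b g) = 0)"
proof -
  have fc: "continuous_on {-y..y} (fW b g)" by (rule fW_cont) (use W in auto)
  define F where "F = (\<lambda>s. integral {-y..s} (fW b g) - integral {-y..-s} (fW b g))"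
  note Fp = sym_F[OF y fc, folded F_def]
  have F0: "F 0 = 0" and Fy: "F y = integral {-y..y} (fW b g)" by (simp_all add: F_def)
  have Fd: "fW b g s + fW b g (-s) = 2 * g * s^2 / (Wq b g s * Wq b g (-s))" if "0 < s" "s < y" for s
  proof -
    have "Wq b g s > 0" "Wq b g (-s) > 0" using W[of s] W[of "-s"] that by auto
    then show ?thesis unfolding fW_def by (simp add: field_simps Wq_def power2_eq_square)
  qed
  have pos: "Wq b g s * Wq b g (-s) > 0" if "0 < s" "s < y" for s
    using W[of s] W[of "-s"] that by auto
  show ?thesis
  proof (intro conjI impI)
    assume g: "g > 0"
    have "F 0 < F y"
    proof (rule DERIV_pos_imp_increasing_open[OF y _ Fp(1)])
      fix s assume s: "0 < s" "s < y"
      show "\<exists>d. DERIV F s :> d \<and> d > 0"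
        using Fp(4)[OF s] Fd[OF s] pos[OF s] g s by (intro exI[of _ "fW b g s + fW b g (-s)"]) simp
    qed
    then show "integral {-y..y} (fW b g) > 0" using F0 Fy by simp
  next
    assume g: "g < 0"
    have "F 0 > F y"
    proof (rule DERIV_neg_imp_decreasing_open[OF y _ Fp(1)])
      fix s assume s: "0 < s" "s < y"
      have "2 * g * s^2 < 0" using g s by (simp add: mult_neg_pos)
      then show "\<exists>d. DERIV F s :> d \<and> d < 0"
        using Fp(4)[OF s] Fd[OF s] pos[OF s] by (intro exI[of _ "fW b g s + fW b g (-s)"]) (simp add: divide_neg_pos)
    qed
    then show "integral {-y..y} (fW b g) < 0" using F0 Fy by simp
  next
    assume g: "g = 0"
    have "F y = F 0"
    proof (rule DERIV_isconst_end[OF y Fp(1)])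
      fix s assume s: "0 < s" "s < y"
      show "DERIV F s :> 0" using Fp(4)[OF s] Fd[OF s] g by simp
    qed
    then show "integral {-y..y} (fW b g) = 0" using F0 Fy by simp
  qed
qed

lemma Pi_sign:
  assumes x: "x > 0" and r: "partner b g x r"
  shows "(g > 0 \<longrightarrow> r < -x) \<and> (g < 0 \<longrightarrow> r > -x) \<and> (g = 0 \<longrightarrow> r = -x)"
proof -
  have r0: "r < 0" and Wr: "\<And>v. v \<in> {r..x} \<Longrightarrow> Wq b g v > 0" and Ir: "integral {r..x} (fW b g) = 0"
    using r unfolding partner_def by auto
  have Wdiff: "Wq b g v - Wq b g (-v) = - 2 * g * v" for v by (simp add: Wq_def)
  show ?thesis
  proof (intro conjI impI)
    assume g: "g > 0"
    have W: "Wq b g v > 0" if "v \<in> {-x..x}" for v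
    proof (cases "v \<ge> 0")
      case True then show ?thesis using Wr[of v] that r0 by auto
    next
      case False
      have "Wq b g (-v) > 0" using Wr[of "-v"] that r0 False by auto
      moreover have "g * v < 0" using g False by (simp add: mult_pos_neg)
      then have "- 2 * g * v \<ge> 0" by simp
      ultimately show ?thesis using Wdiff[of v] by linarith
    qed
    have I: "integral {-x..x} (fW b g) > 0" using sym_sign[OF x W] g by simp
    show "r < -x"
    proof (rule ccontr)
      assume "\<not> r < -x"
      then have rx: "-x \<le> r" by simp
      have fc: "continuous_on {-x..x} (fW b g)" by (rule fW_cont) (use W in auto)
      have "integral {-x..x} (fW b g) = integral {-x..r} (fW b g) + integral {r..x} (fW b g)"
        by (rule int_split[OF fc rx]) (use r0 x in auto)
      moreover have "integral {-x..r} (fW b g) \<le> 0"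
      proof (rule int_nonpos[OF rx continuous_on_subset[OF fc]])
        show "{-x..r} \<subseteq> {-x..x}" using r0 x by auto
        fix v assume "-x < v" "v < r"
        then show "fW b g v < 0" using W[of v] r0 unfolding fW_def by (auto simp: divide_neg_pos)
      qed
      ultimately show False using I Ir by simp
    qed
  next
    assume g: "g < 0"
    show "r > -x"
    proof (rule ccontr)
      assume "\<not> r > -x"
      then have rx: "r \<le> -x" by simp
      have W: "Wq b g v > 0" if "v \<in> {-x..x}" for v using Wr[of v] that rx by auto
      have I: "integral {-x..x} (fW b g) < 0" using sym_sign[OF x W] g by simp
      have fc: "continuous_on {r..x} (fW b g)" by (rule fW_cont) (use Wr in auto)
      have "integral {r..x} (fW b g) = integral {r..-x} (fW b g) + integral {-x..x} (fW b g)"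
        by (rule int_split[OF fc rx]) (use x in auto)
      moreover have "integral {r..-x} (fW b g) \<le> 0"
      proof (rule int_nonpos[OF rx continuous_on_subset[OF fc]])
        show "{r..-x} \<subseteq> {r..x}" using x by auto
        fix v assume "r < v" "v < -x"
        then show "fW b g v < 0" using Wr[of v] x unfolding fW_def by (auto simp: divide_neg_pos)
      qed
      ultimately show False using I Ir by simp
    qed
  next
    assume g: "g = 0"
    have W: "Wq b g v > 0" if "v \<in> {-x..x}" for v
    proof (cases "v \<ge> 0")
      case True then show ?thesis using Wr[of v] that r0 by auto
    next
      case False
      have "Wq b g (-v) > 0" using Wr[of "-v"] that r0 False by auto
      then show ?thesis using Wdiff[of v] g by simp
    qed
    have "partner b g x (-x)" unfolding partner_def using x W sym_sign[OF x W] g by auto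
    then show "r = -x" using partner_unique[OF x r] by simp
  qed
qed

lemma ell_unique:
  assumes Bd: "B > dp" "dp > 0" and cond: "sdi_cond bm gm B ap dp"
    and x1: "x1 \<in> open_int B ap dp bm gm" and x2: "x2 \<in> open_int B ap dp bm gm"
    and e1: "ell B ap dp bm gm x1 = 0" and e2: "ell B ap dp bm gm x2 = 0"
  shows "x1 = x2"
proof -
  have noz: False if "bm = 0 \<or> gm = 0" and y: "y \<in> open_int B ap dp bm gm" and ey: "ell B ap dp bm gm y = 0" for y
  proof (cases "bm = 0")
    case True
    then have "ap + gm * (B - dp) \<noteq> 0" using cond by (simp add: sdi_cond_def)
    then show False using ey True by (simp add: ell_def algebra_simps)
  next
    case False
    then have g: "gm = 0" using that by simp
    then have a: "ap \<noteq> 0" using cond False by (simp add: sdi_cond_def)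
    note yf = O_facts[OF y]
    have "Pi_map bm gm y = - y" using Pi_sign[OF yf(1) yf(3)] g by simp
    then have "ell B ap dp bm gm y = - ap * Wq bm gm y"
      by (simp add: ell_def Wq_def g algebra_simps power2_eq_square)
    moreover have "Wq bm gm y > 0" using yf(3) yf(1) unfolding partner_def by auto
    ultimately show False using ey a by simp
  qed
  show ?thesis
  proof (cases "bm = 0 \<or> gm = 0")
    case True then show ?thesis using noz[OF True x1 e1] by simp
  next
    case False
    then have b: "bm \<noteq> 0" and g: "gm \<noteq> 0" by auto
    define f where "f y = bm * gm * ell B ap dp bm gm y" for y
    define f' where "f' y = bm * gm * (ap * bm * (Pi_map bm gm y + y * (y * Wq bm gm (Pi_map bm gm y) / (Pi_map bm gm y * Wq bm gm y)))
       + bm * (B - dp) * (1 + y * Wq bm gm (Pi_map bm gm y) / (Pi_map bm gm y * Wq bm gm y)))" for y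
    have der: "DERIV f s :> f' s" if "s \<in> open_int B ap dp bm gm" for s
      unfolding f_def[abs_def] f'_def by (rule DERIV_cmult[OF ell_deriv[OF Bd that]])
    have pos: "f' s > 0" if sO: "s \<in> open_int B ap dp bm gm" and fs: "f s = 0" for s
    proof -
      note sf = O_facts[OF sO]
      define r where "r = Pi_map bm gm s"
      define P' where "P' = s * Wq bm gm r / (r * Wq bm gm s)"
      have s: "s > 0" by (rule sf(1))
      have r0: "r < 0" and Wr: "\<And>v. v \<in> {r..s} \<Longrightarrow> Wq bm gm v > 0"
        using sf(3) unfolding partner_def r_def by auto
      have Ws: "Wq bm gm s > 0" and Wr': "Wq bm gm r > 0" using Wr[of s] Wr[of r] r0 s by auto
      have Xr: "Xl B ap dp r > 0"
        using sf(4)[of r] r0 s Bd unfolding r_def[symmetric] by (auto simp: Xsl_Xl zero_less_divide_iff)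
      have es: "ell B ap dp bm gm s = 0" using fs b g by (simp add: f_def)
      have eqW: "Wq bm gm s * Xl B ap dp r = Wq bm gm r * Xl B ap dp s"
        using WX_identity[of bm gm s B ap dp r] es unfolding ell_def r_def[symmetric] by simp
      have XP: "Xl B ap dp s * P' = s * Xl B ap dp r / r"
      proof -
        have "Xl B ap dp s * P' = s * (Wq bm gm r * Xl B ap dp s) / (r * Wq bm gm s)"
          by (simp add: P'_def)
        also have "\<dots> = s * (Wq bm gm s * Xl B ap dp r) / (r * Wq bm gm s)" by (simp add: eqW)
        also have "\<dots> = s * Xl B ap dp r / r" using Ws by simp
        finally show ?thesis .
      qed
      have "f' s = bm * gm * (bm * (Xl B ap dp r + Xl B ap dp s * P'))"
        unfolding f'_def r_def[symmetric] P'_def[symmetric] by (simp add: Xl_def algebra_simps)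
      also have "\<dots> = bm * bm * Xl B ap dp r * (gm * (r + s) / r)"
        unfolding XP using r0 by (simp add: field_simps)
      finally have f's: "f' s = bm * bm * Xl B ap dp r * (gm * (r + s) / r)" .
      have "gm * (r + s) / r > 0"
      proof (cases "gm > 0")
        case True
        then have "r < -s" using Pi_sign[OF s sf(3)] unfolding r_def by simp
        then have "gm * (r + s) < 0" using True by (simp add: mult_pos_neg)
        then show ?thesis using r0 by (simp add: zero_less_divide_iff)
      next
        case False
        then have "gm < 0" using g by simp
        then have "r > -s" using Pi_sign[OF s sf(3)] unfolding r_def by simp
        then show ?thesis using \<open>gm < 0\<close> r0 by (simp add: zero_less_divide_iff mult_neg_pos zero_less_mult_iff)
      qed
      moreover have "bm * bm > 0" using b by (auto simp: zero_less_mult_iff linorder_neq_iff)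
      ultimately show ?thesis unfolding f's using Xr by (metis mult_pos_pos)
    qed
    show ?thesis
    proof (rule ccontr)
      assume ne: "x1 \<noteq> x2"
      have gen: False if ab: "a < c" and aO: "a \<in> open_int B ap dp bm gm" and cO: "c \<in> open_int B ap dp bm gm"
        and ea: "ell B ap dp bm gm a = 0" and ec: "ell B ap dp bm gm c = 0" for a c
      proof (rule transversal[OF ab])
        have a0: "a > 0" using O_facts(1)[OF aO] .
        have inO: "s \<in> open_int B ap dp bm gm" if "s \<in> {a..c}" for s
          by (rule O_down[OF cO]) (use that a0 in auto)
        show "DERIV f s :> f' s" if "s \<in> {a..c}" for s using der[OF inO[OF that]] .
        show "f' s > 0" if "s \<in> {a..c}" "f s = 0" for s using pos[OF inO[OF that(1)] that(2)] .
        show "f a = 0" using ea by (simp add: f_def)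
        show "f c = 0" using ec by (simp add: f_def)
      qed
      show False
      proof (cases "x1 < x2")
        case True then show False using gen[OF True x1 x2 e1 e2] by simp
      next
        case False then have "x2 < x1" using ne by simp
        then show False using gen[OF _ x2 x1 e2 e1] by simp
      qed
    qed
  qed
qed


lemma Pi_map_0: "Pi_map b g 0 = 0" by (simp add: Pi_map_def)

lemma psi_0: "psi B ap dp bm gm 0 = 0" by (simp add: psi_def Pi_map_0)

lemma psi_cont0:
  assumes Bd: "B > dp" "dp > 0" and x1O: "x1 \<in> open_int B ap dp bm gm"
  shows "continuous_on {0..x1} (psi B ap dp bm gm)"
proof -
  note xf = O_facts[OF x1O]
  have x1: "x1 > 0" by (rule xf(1))
  define lo where "lo = Pi_map bm gm x1"
  have lo0: "lo < 0" and Wlo: "\<And>v. v \<in> {lo..x1} \<Longrightarrow> Wq bm gm v > 0"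
    and Ilo: "integral {lo..x1} (fW bm gm) = 0"
    using xf(3) unfolding partner_def lo_def by auto
  have Xlo: "\<And>v. v \<in> {lo..x1} \<Longrightarrow> Xsl B ap dp v > 0" using xf(4) unfolding lo_def by auto
  have dpnz: "1 + dp \<noteq> 0" using Bd by simp
  have yO: "y \<in> open_int B ap dp bm gm" if "0 < y" "y \<le> x1" for y by (rule O_down[OF x1O that])
  have Pr: "lo \<le> Pi_map bm gm y \<and> Pi_map bm gm y \<le> 0" if "0 \<le> y" "y \<le> x1" for y
  proof (cases "y = 0")
    case True then show ?thesis using lo0 by (simp add: Pi_map_0)
  next
    case False
    then have y: "0 < y" using that by simp
    have pr: "partner bm gm y (Pi_map bm gm y)" using O_facts(3)[OF yO[OF y that(2)]] .
    have "lo \<le> Pi_map bm gm y"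
    proof (cases "y = x1")
      case True then show ?thesis by (simp add: lo_def)
    next
      case False
      then have "y < x1" using that by simp
      from partner_mono[OF y this pr xf(3)] show ?thesis by (simp add: lo_def)
    qed
    then show ?thesis using pr unfolding partner_def by simp
  qed
  define hh where "hh u = u / Xsl B ap dp u" for u
  have hc: "continuous_on {lo..x1} hh"
    unfolding hh_def by (intro continuous_intros continuous_at_imp_continuous_on ballI Xsl_cont[OF dpnz])
      (use Xlo in force)
  define G where "G v = integral {lo..v} hh" for v
  have Gc: "continuous_on {lo..x1} G" unfolding G_def by (rule prim_cont[OF hc])
  have psiG: "psi B ap dp bm gm y = G y - G (Pi_map bm gm y)" if "y \<in> {0..x1}" for y
  proof -
    have "G y = G (Pi_map bm gm y) + integral {Pi_map bm gm y..y} hh"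
      unfolding G_def by (rule int_split[OF continuous_on_subset[OF hc]]) (use that Pr[of y] in auto)
    then show ?thesis unfolding psi_def hh_def[abs_def] by simp
  qed
  have fc: "continuous_on {lo..x1} (fW bm gm)" by (rule fW_cont) (use Wlo in auto)
  define \<Phi> where "\<Phi> v = integral {lo..v} (fW bm gm)" for v
  have \<Phi>c: "continuous_on {lo..x1} \<Phi>" unfolding \<Phi>_def by (rule prim_cont[OF fc])
  have \<Phi>split: "\<Phi> w = \<Phi> v + integral {v..w} (fW bm gm)" if "lo \<le> v" "v \<le> w" "w \<le> x1" for v w
    unfolding \<Phi>_def by (rule int_split[OF continuous_on_subset[OF fc]]) (use that in auto)
  have Pc: "continuous_on {0..x1} (Pi_map bm gm)"
    unfolding continuous_on_eq_continuous_within
  proof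
    fix y assume y: "y \<in> {0..x1}"
    show "continuous (at y within {0..x1}) (Pi_map bm gm)"
    proof (cases "y = 0")
      case False
      then have "y \<in> open_int B ap dp bm gm" using yO y by auto
      then have "isCont (Pi_map bm gm) y" using local_deriv[OF Bd] DERIV_isCont by blast
      then show ?thesis by (rule continuous_at_imp_continuous_at_within)
    next
      case True
      show ?thesis unfolding continuous_within_eps_delta True
      proof (intro allI impI)
        fix e :: real assume e: "e > 0"
        define e' where "e' = min (e / 2) (- lo / 2)"
        have e': "e' > 0" "e' < e" "lo < - e'" using e lo0 by (auto simp: e'_def min_def)
        have "integral {-e'..0} (fW bm gm) < 0"
        proof (rule int_neg[of "-e'" 0])
          show "- e' < 0" using e' by simp
          show "continuous_on {-e'..0} (fW bm gm)" by (rule continuous_on_subset[OF fc]) (use e' x1 in auto)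
          fix v assume "- e' < v" "v < 0"
          then show "fW bm gm v < 0" using Wlo[of v] e' x1 unfolding fW_def by (auto simp: divide_neg_pos)
        qed
        then have \<kappa>: "\<Phi> 0 < \<Phi> (-e')" using \<Phi>split[of "-e'" 0] e' x1 by simp
        define \<kappa> where "\<kappa> = \<Phi> (-e') - \<Phi> 0"
        have \<kappa>p: "\<kappa> > 0" using \<kappa> by (simp add: \<kappa>_def)
        obtain d where d: "d > 0" "\<And>v. v \<in> {lo..x1} \<Longrightarrow> dist v 0 < d \<Longrightarrow> dist (\<Phi> v) (\<Phi> 0) < \<kappa>"
          using \<Phi>c \<kappa>p lo0 x1 unfolding continuous_on_iff by (metis atLeastAtMost_iff less_imp_le)
        show "\<exists>d>0. \<forall>v\<in>{0..x1}. dist v 0 < d \<longrightarrow> dist (Pi_map bm gm v) (Pi_map bm gm 0) < e"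
        proof (intro exI conjI ballI impI)
          show "d > 0" by (rule d(1))
          fix v assume v: "v \<in> {0..x1}" "dist v 0 < d"
          show "dist (Pi_map bm gm v) (Pi_map bm gm 0) < e"
          proof (cases "v = 0")
            case True then show ?thesis using e by (simp add: Pi_map_0)
          next
            case False
            then have vp: "v > 0" using v by simp
            have pr: "partner bm gm v (Pi_map bm gm v)" using O_facts(3)[OF yO[OF vp]] v by simp
            have P: "lo \<le> Pi_map bm gm v" "Pi_map bm gm v < 0" using Pr[of v] v pr unfolding partner_def by auto
            have \<Phi>v: "\<Phi> v = \<Phi> (Pi_map bm gm v)"
              using \<Phi>split[of "Pi_map bm gm v" v] P v pr unfolding partner_def by auto
            have "\<Phi> v - \<Phi> 0 < \<kappa>" using d(2)[of v] v lo0 by (auto simp: dist_real_def)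
            have "Pi_map bm gm v > - e'"
            proof (rule ccontr)
              assume "\<not> Pi_map bm gm v > - e'"
              then have Pe: "Pi_map bm gm v \<le> - e'" by simp
              have "integral {Pi_map bm gm v..-e'} (fW bm gm) \<le> 0"
              proof (rule int_nonpos[OF Pe])
                show "continuous_on {Pi_map bm gm v..-e'} (fW bm gm)"
                  by (rule continuous_on_subset[OF fc]) (use P e' x1 in auto)
                fix w assume "Pi_map bm gm v < w" "w < - e'"
                then show "fW bm gm w < 0" using Wlo[of w] P e' x1 unfolding fW_def by (auto simp: divide_neg_pos)
              qed
              then have "\<Phi> (-e') \<le> \<Phi> (Pi_map bm gm v)" using \<Phi>split[of "Pi_map bm gm v" "-e'"] P Pe e' x1 by simp
              then show False using \<open>\<Phi> v - \<Phi> 0 < \<kappa>\<close> \<Phi>v by (simp add: \<kappa>_def)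
            qed
            then show ?thesis using P e' by (simp add: dist_real_def Pi_map_0)
          qed
        qed
      qed
    qed
  qed
  have c2: "continuous_on {0..x1} (\<lambda>y. G (Pi_map bm gm y))"
    by (rule continuous_on_compose2[OF Gc Pc]) (use Pr x1 in force)
  have c1: "continuous_on {0..x1} G" by (rule continuous_on_subset[OF Gc]) (use lo0 in auto)
  have "continuous_on {0..x1} (\<lambda>y. G y - G (Pi_map bm gm y))" by (intro continuous_intros c1 c2)
  then show ?thesis by (rule continuous_on_eq) (use psiG in auto)
qed

lemma part1_psi:
  assumes Bd: "B > dp" "dp > 0" and cond: "sdi_cond bm gm B ap dp"
  shows "(\<forall>x\<in>open_int B ap dp bm gm. psi B ap dp bm gm x = 0 \<longrightarrow>
            (\<exists>d. DERIV (psi B ap dp bm gm) x :> d \<and> d \<noteq> 0)) \<and>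
         (\<forall>x\<in>open_int B ap dp bm gm. \<forall>y\<in>open_int B ap dp bm gm.
            psi B ap dp bm gm x = 0 \<and> psi B ap dp bm gm y = 0 \<longrightarrow> x = y)"
proof -
  let ?O = "open_int B ap dp bm gm"
  let ?p = "psi B ap dp bm gm"
  have rolle: "\<exists>z. a < z \<and> z < c \<and> ell B ap dp bm gm z = 0"
    if ac: "a < c" and a0: "0 \<le> a" and cO: "c \<in> ?O" and pa: "?p a = 0" and pc: "?p c = 0" for a c
  proof -
    have inO: "z \<in> ?O" if "a < z" "z \<le> c" for z by (rule O_down[OF cO]) (use that a0 in auto)
    have cont: "continuous_on {a..c} ?p" by (rule continuous_on_subset[OF psi_cont0[OF Bd cO]]) (use a0 in auto)
    obtain l z where z: "a < z" "z < c" "DERIV ?p z :> l" "?p c - ?p a = (c - a) * l"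
      using MVT[OF ac cont] psi_deriv_C[OF Bd inO] real_differentiable_def by (metis less_imp_le)
    have l0: "l = 0" using z(4) pa pc ac by simp
    obtain C where C: "C > 0" "DERIV ?p z :> C * ell B ap dp bm gm z" using psi_deriv_C[OF Bd inO[OF z(1) less_imp_le[OF z(2)]]] by blast
    have "C * ell B ap dp bm gm z = 0" using DERIV_unique[OF C(2) z(3)] l0 by simp
    then show ?thesis using C(1) z by auto
  qed
  show ?thesis
  proof (intro conjI ballI impI)
    fix x assume xO: "x \<in> ?O" and px: "?p x = 0"
    have x: "x > 0" using O_facts(1)[OF xO] .
    obtain z where z: "0 < z" "z < x" "ell B ap dp bm gm z = 0" using rolle[OF x _ xO psi_0 px] by auto
    obtain C where C: "C > 0" "DERIV ?p x :> C * ell B ap dp bm gm x" using psi_deriv_C[OF Bd xO] by blast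
    have "ell B ap dp bm gm x \<noteq> 0"
    proof
      assume "ell B ap dp bm gm x = 0"
      then have "z = x" using ell_unique[OF Bd cond O_down[OF xO z(1) less_imp_le[OF z(2)]] xO z(3)] by simp
      then show False using z by simp
    qed
    then show "\<exists>d. DERIV ?p x :> d \<and> d \<noteq> 0" using C by auto
  next
    fix x y assume xO: "x \<in> ?O" and yO: "y \<in> ?O" and pxy: "?p x = 0 \<and> ?p y = 0"
    have gen: False if ab: "a < c" and aO: "a \<in> ?O" and cO: "c \<in> ?O" and pa: "?p a = 0" and pc: "?p c = 0" for a c
    proof -
      have a: "a > 0" using O_facts(1)[OF aO] .
      obtain z1 where z1: "0 < z1" "z1 < a" "ell B ap dp bm gm z1 = 0" using rolle[OF a _ aO psi_0 pa] by auto
      obtain z2 where z2: "a < z2" "z2 < c" "ell B ap dp bm gm z2 = 0" using rolle[OF ab _ cO pa pc] a by auto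
      have "z1 = z2" using ell_unique[OF Bd cond O_down[OF cO z1(1)] O_down[OF cO] z1(3) z2(3)] z1 z2 a by auto
      then show False using z1 z2 by simp
    qed
    show "x = y"
    proof (rule ccontr)
      assume "x \<noteq> y"
      then consider "x < y" | "y < x" by linarith
      then show False using gen xO yO pxy by cases auto
    qed
  qed
qed


lemma odd_int:
  fixes f :: "real \<Rightarrow> real"
  assumes y: "y > 0" and fc: "continuous_on {-y..y} f" and odd: "\<And>v. f (-v) = - f v"
  shows "integral {-y..y} f = 0"
proof -
  define F where "F = (\<lambda>s. integral {-y..s} f - integral {-y..-s} f)"
  note Fp = sym_F[OF y fc, folded F_def]
  have F0: "F 0 = 0" and Fy: "F y = integral {-y..y} f" by (simp_all add: F_def)
  have "F y = F 0"
  proof (rule DERIV_isconst_end[OF y Fp(1)])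
    fix s assume s: "0 < s" "s < y"
    show "DERIV F s :> 0" using Fp(4)[OF s] odd[of s] by simp
  qed
  then show ?thesis using F0 Fy by simp
qed

lemma part3_psi:
  assumes Bd: "B > dp" "dp > 0" and ncond: "\<not> sdi_cond bm gm B ap dp"
    and x: "x \<in> insert 0 (open_int B ap dp bm gm)"
  shows "psi B ap dp bm gm x = 0"
proof (cases "x = 0")
  case True then show ?thesis by (simp add: psi_0)
next
  case False
  then have xO: "x \<in> open_int B ap dp bm gm" using x by simp
  note xf = O_facts[OF xO]
  define r where "r = Pi_map bm gm x"
  have pr: "partner bm gm x r" using xf(3) by (simp add: r_def)
  have c: "B - dp > 0" using Bd by simp
  consider "bm = 0" "ap + gm * (B - dp) = 0" | "bm \<noteq> 0" "ap = 0" "gm = 0"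
    using ncond unfolding sdi_cond_def by auto
  then show ?thesis
  proof cases
    case 1
    have eq: "u / Xsl B ap dp u = ((1 + dp) / (B - dp)) * fW bm gm u" for u
    proof -
      have a: "ap = - gm * (B - dp)" using 1 by simp
      have "Xsl B ap dp u = (B - dp) / (1 + dp) * Wq bm gm u"
        using 1(1) Bd unfolding Xsl_def Wq_def a by (simp add: field_simps)
      then show ?thesis unfolding fW_def by (simp add: divide_inverse inverse_mult_distrib mult_ac)
    qed
    have "psi B ap dp bm gm x = ((1 + dp) / (B - dp)) * integral {r..x} (fW bm gm)"
      unfolding psi_def r_def[symmetric] eq by simp
    then show ?thesis using pr unfolding partner_def by simp
  next
    case 2
    have rx: "r = - x" using Pi_sign[OF xf(1) pr] 2 by simp
    have eq: "u / Xsl B ap dp u = ((1 + dp) / (B - dp)) * u" for u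
      using 2 Bd unfolding Xsl_def by (simp add: field_simps)
    have "psi B ap dp bm gm x = integral {-x..x} (\<lambda>u. ((1 + dp) / (B - dp)) * u)"
      unfolding psi_def r_def[symmetric] rx eq by simp
    also have "\<dots> = 0" by (rule odd_int[OF xf(1)]) (use Bd in \<open>auto intro!: continuous_intros\<close>)
    finally show ?thesis .
  qed
qed


lemma ftc:
  fixes F f :: "real \<Rightarrow> real"
  assumes "a \<le> b" "\<And>v. v \<in> {a..b} \<Longrightarrow> DERIV F v :> f v"
  shows "integral {a..b} f = F b - F a"
proof (rule integral_unique[OF fundamental_theorem_of_calculus[OF assms(1)]])
  fix v assume "v \<in> {a..b}"
  then show "(F has_vector_derivative f v) (at v within {a..b})"
    using assms(2) has_real_derivative_iff_has_vector_derivative has_field_derivative_at_within by blast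
qed

context zsol
begin

lemma first_return:
  assumes x: "x > 0" and T: "T > 0" and YT: "Y T \<ge> 0"
  shows "\<exists>t>0. (\<forall>s\<in>{0<..<t}. Y s < 0) \<and> Y t = 0"
proof -
  have "- X 0 + g * Y 0 < 0" using x by (simp add: X0 Y0)
  from DERIV_neg_dec_right[OF Y'[of 0] this]
  obtain d where d: "d > 0" "\<And>h. h > 0 \<Longrightarrow> h < d \<Longrightarrow> Y h < 0" by (auto simp: Y0)
  define \<delta> where "\<delta> = d / 2"
  have \<delta>: "\<delta> > 0" using d by (simp add: \<delta>_def)
  have Yneg1: "Y s < 0" if "0 < s" "s \<le> \<delta>" for s using d that by (simp add: \<delta>_def)
  have \<delta>T: "\<delta> < T" using Yneg1[of T] YT T by force
  have Y\<delta>: "Y \<delta> < 0" using Yneg1[OF \<delta>] by simp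
  define Z where "Z = {\<delta>..T} \<inter> Y -` {0}"
  have Zc: "closed Z" unfolding Z_def by (rule continuous_closed_preimage[OF cont_Y]) auto
  have Zne: "Z \<noteq> {}"
  proof -
    obtain z where "\<delta> \<le> z" "z \<le> T" "Y z = 0" using IVT'[of Y \<delta> 0 T, OF _ _ _ cont_Y] Y\<delta> YT \<delta>T by auto
    then show ?thesis unfolding Z_def by auto
  qed
  have Zb: "bdd_below Z" unfolding Z_def by (rule bdd_belowI[of _ \<delta>]) auto
  define t' where "t' = Inf Z"
  have t'Z: "t' \<in> Z" unfolding t'_def by (rule closed_contains_Inf[OF Zne Zb Zc])
  have Yt': "Y t' = 0" and t'r: "\<delta> \<le> t'" "t' \<le> T" using t'Z unfolding Z_def by auto
  have t'p: "t' > 0" using t'r \<delta> by simp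
  have neg: "Y s < 0" if "s \<in> {0<..<t'}" for s
  proof (cases "s \<le> \<delta>")
    case True then show ?thesis using Yneg1 that by auto
  next
    case False
    show ?thesis
    proof (rule ccontr)
      assume "\<not> Y s < 0"
      then obtain z where z: "\<delta> \<le> z" "z \<le> s" "Y z = 0"
        using IVT'[of Y \<delta> 0 s, OF _ _ _ cont_Y] Y\<delta> False by auto
      then have "z \<in> Z" unfolding Z_def using that t'r by auto
      then have "t' \<le> z" unfolding t'_def by (rule cInf_lower[OF _ Zb])
      then show False using z that by auto
    qed
  qed
  show ?thesis using t'p neg Yt' by blast
qed

lemma pi_ret_of_return:
  assumes "t > 0" "\<forall>s\<in>{0<..<t}. Y s < 0" "Y t = 0"
  shows "pi_ret b g x (X t)"
  unfolding pi_ret_def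
proof (intro exI conjI)
  show "t > 0" by (rule assms(1))
  show "p 0 = (x, 0)" by (rule init)
  show "\<forall>s. (p has_vector_derivative Zm b g (p s)) (at s)" using der by blast
  show "\<forall>s\<in>{0<..<t}. snd (p s) < 0" using assms(2) unfolding Y_def by blast
  show "p t = (X t, 0)" using assms(3) unfolding X_def Y_def by (simp add: prod_eq_iff)
qed

end

definition pex :: "real \<Rightarrow> real \<Rightarrow> real \<Rightarrow> real \<times> real" where
  "pex \<alpha> \<beta> s = (1 + exp s * ((\<alpha> - \<beta>) * cos s + (\<alpha> + \<beta>) * sin s), 1/2 + exp s * (\<alpha> * cos s + \<beta> * sin s))"

lemma pex_der: "(pex \<alpha> \<beta> has_vector_derivative Zm 2 2 (pex \<alpha> \<beta> s)) (at s)"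
proof -
  have d1: "((\<lambda>s. 1 + exp s * ((\<alpha> - \<beta>) * cos s + (\<alpha> + \<beta>) * sin s)) has_real_derivative
      exp s * (2 * \<alpha> * cos s + 2 * \<beta> * sin s)) (at s)"
    by (auto intro!: derivative_eq_intros simp: algebra_simps)
  have d2: "((\<lambda>s. 1/2 + exp s * (\<alpha> * cos s + \<beta> * sin s)) has_real_derivative
      exp s * ((\<alpha> + \<beta>) * cos s + (\<beta> - \<alpha>) * sin s)) (at s)"
    by (auto intro!: derivative_eq_intros simp: algebra_simps)
  have "(pex \<alpha> \<beta> has_vector_derivative (exp s * (2 * \<alpha> * cos s + 2 * \<beta> * sin s),
      exp s * ((\<alpha> + \<beta>) * cos s + (\<beta> - \<alpha>) * sin s))) (at s)"
    unfolding pex_def[abs_def]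
    by (rule has_vector_derivative_Pair[OF d1[unfolded has_real_derivative_iff_has_vector_derivative]
          d2[unfolded has_real_derivative_iff_has_vector_derivative]])
  moreover have "(exp s * (2 * \<alpha> * cos s + 2 * \<beta> * sin s),
      exp s * ((\<alpha> + \<beta>) * cos s + (\<beta> - \<alpha>) * sin s)) = Zm 2 2 (pex \<alpha> \<beta> s)"
    by (simp add: Zm_def pex_def algebra_simps)
  ultimately show ?thesis by simp
qed

lemma pex_zsol: "zsol 2 2 (1/2 - \<beta>) (pex (-(1/2)) \<beta>)"
proof
  show "\<And>s. (pex (-(1/2)) \<beta> has_vector_derivative Zm 2 2 (pex (-(1/2)) \<beta> s)) (at s)" by (rule pex_der)
  show "pex (-(1/2)) \<beta> 0 = (1/2 - \<beta>, 0)" by (simp add: pex_def)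
qed

lemma ex_pi_ret:
  assumes x0: "x0 > 0"
  shows "\<exists>u. pi_ret 2 2 x0 u"
proof -
  interpret zsol 2 2 x0 "pex (-(1/2)) (1/2 - x0)" using pex_zsol[of "1/2 - x0"] by simp
  have v: "snd (pex (-(1/2)) (1/2 - x0) pi) = 1/2 + exp pi / 2" by (simp add: pex_def)
  have "Y pi = 1/2 + exp pi / 2" by (simp only: Y_def v)
  moreover have "1/2 + exp pi / 2 \<ge> (0::real)" by (simp add: add_nonneg_nonneg less_imp_le)
  ultimately have "Y pi \<ge> 0" by simp
  then obtain t where "t > 0" "\<forall>s\<in>{0<..<t}. Y s < 0" "Y t = 0"
    using first_return[OF x0 pi_gt_zero] by blast
  then show ?thesis using pi_ret_of_return by blast
qed


lemma Xsl_ex: "Xsl 2 (-1) 1 u = (1 - u) / 2"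
  by (simp add: Xsl_def)

lemma ex_O:
  assumes "0 < x" "x < 1"
  shows "x \<in> open_int 2 (-1) 1 2 2"
  unfolding open_int_def
proof (intro CollectI conjI subsetI)
  show "0 < x" by fact
  fix y assume y: "y \<in> {0..x}"
  show "y \<in> good_set 2 (-1) 1 2 2"
  proof (cases "y = 0")
    case True
    then show ?thesis by (simp add: good_set_def Pi_dom_def Pi_map_0 Xsl_ex)
  next
    case False
    then have y0: "y > 0" using y by simp
    obtain u where u: "pi_ret 2 2 y u" using ex_pi_ret[OF y0] by blast
    have "Pi_map 2 2 y = u" by (rule Pi_map_eq[OF y0 u])
    moreover have "u < 0" using pi_ret_partner[OF y0 u] unfolding partner_def by simp
    ultimately show ?thesis using u y0 y assms
      by (auto simp: good_set_def Pi_dom_def Xsl_ex)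
  qed
qed

lemma example_zero: "\<exists>z\<in>open_int 2 (-1) 1 2 2. psi 2 (-1) 1 2 2 z = 0"
proof -
  have Bd: "(2::real) > 1" "(1::real) > 0" by simp_all
  obtain u1 where u1: "pi_ret 2 2 1 u1" using ex_pi_ret[of 1] by auto
  have q1: "partner 2 2 1 u1" by (rule pi_ret_partner[OF _ u1]) simp
  define M where "M = - u1"
  have M: "M > 0" using q1 unfolding partner_def M_def by simp
  have PiM: "- Pi_map 2 2 y < M \<and> Pi_map 2 2 y < - y" if "0 < y" "y < 1" for y
  proof -
    have yO: "y \<in> open_int 2 (-1) 1 2 2" by (rule ex_O[OF that])
    have pr: "partner 2 2 y (Pi_map 2 2 y)" using O_facts(3)[OF yO] .
    have "u1 < Pi_map 2 2 y" by (rule partner_mono[OF that(1) that(2) pr q1])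
    moreover have "Pi_map 2 2 y < - y" using Pi_sign[OF that(1) pr] by simp
    ultimately show ?thesis by (simp add: M_def)
  qed
  have ell_ex: "ell 2 (-1) 1 2 2 y = - 2 * y * Pi_map 2 2 y + 2 * (y + Pi_map 2 2 y) - 1" for y
    by (simp add: ell_def)
  define xa where "xa = min (1/2) (1 / (4 * M))"
  have xa: "0 < xa" "xa < 1" "xa \<le> 1 / (4 * M)" using M by (auto simp: xa_def)
  have psia: "psi 2 (-1) 1 2 2 xa < 0"
  proof -
    have xaO: "xa \<in> open_int 2 (-1) 1 2 2" using ex_O xa by simp
    have "\<exists>l z. 0 < z \<and> z < xa \<and> DERIV (psi 2 (-1) 1 2 2) z :> l \<and>
        psi 2 (-1) 1 2 2 xa - psi 2 (-1) 1 2 2 0 = (xa - 0) * l"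
    proof (rule MVT[OF xa(1) psi_cont0[OF Bd xaO]])
      fix r :: real assume r: "0 < r" "r < xa"
      then have "r < 1" using xa by simp
      then obtain C where "DERIV (psi 2 (-1) 1 2 2) r :> C * ell 2 (-1) 1 2 2 r"
        using psi_deriv_C[OF Bd ex_O[OF r(1)]] by blast
      then show "psi 2 (-1) 1 2 2 differentiable (at r)" unfolding real_differentiable_def by blast
    qed
    then obtain l z where z: "0 < z" "z < xa" "DERIV (psi 2 (-1) 1 2 2) z :> l"
        "psi 2 (-1) 1 2 2 xa - psi 2 (-1) 1 2 2 0 = (xa - 0) * l" by blast
    have zO: "z \<in> open_int 2 (-1) 1 2 2" using ex_O z xa by simp
    obtain C where C: "C > 0" "DERIV (psi 2 (-1) 1 2 2) z :> C * ell 2 (-1) 1 2 2 z"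
      using psi_deriv_C[OF Bd zO] by blast
    have l: "l = C * ell 2 (-1) 1 2 2 z" using DERIV_unique[OF z(3) C(2)] .
    have pz: "- Pi_map 2 2 z < M" "Pi_map 2 2 z < - z" using PiM[of z] z(1) z(2) xa(2) by (meson less_trans)+
    define P where "P = Pi_map 2 2 z"
    have pz': "- P < M" "P < - z" using pz by (simp_all add: P_def)
    have a1: "2 * z * (- P) \<le> 2 * z * M" by (rule mult_left_mono) (use pz' z(1) in auto)
    have a2: "2 * z * M \<le> 2 * xa * M" by (rule mult_right_mono) (use z(2) M in auto)
    have "xa * M \<le> 1 / (4 * M) * M" by (rule mult_right_mono) (use xa(3) M in auto)
    moreover have "1 / (4 * M) * M = 1/4" using M by simp
    ultimately have a3: "2 * xa * M \<le> 1/2" by simp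
    have e: "ell 2 (-1) 1 2 2 z = 2 * z * (- P) + 2 * (z + P) - 1" unfolding ell_ex P_def by simp
    have w: "2 * z * (- P) \<le> 1/2" using a1 a2 a3 by linarith
    have w2: "2 * (z + P) < 0" using pz'(2) by (simp add: algebra_simps)
    have "ell 2 (-1) 1 2 2 z < 0" unfolding e using w w2 by linarith
    then have "l < 0" using l C(1) by (simp add: mult_pos_neg)
    then have "(xa - 0) * l < 0" using xa(1) by (simp add: mult_pos_neg)
    then show ?thesis using z(4) psi_0[of 2 "-1" 1 2 2] by simp
  qed
  define xb where "xb = 1 - exp (- (M^2 + 4) / 2)"
  have M2: "0 \<le> M^2" by simp
  have M4: "M^2 + 4 > 0" using M2 by linarith
  then have "exp (- (M^2 + 4) / 2) < 1" by simp
  then have xb: "0 < xb" "xb < 1" by (auto simp: xb_def)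
  have lnxb: "ln (1 - xb) = - (M^2 + 4) / 2" by (simp add: xb_def)
  have psib: "psi 2 (-1) 1 2 2 xb > 0"
  proof -
    have xbO: "xb \<in> open_int 2 (-1) 1 2 2" using ex_O xb by simp
    define r where "r = Pi_map 2 2 xb"
    have r: "- r < M" "r < 0" using PiM[OF xb] xb unfolding r_def by auto
    define hh where "hh u = u / Xsl 2 (-1) 1 u" for u
    have hh: "hh u = 2 * u / (1 - u)" for u by (simp add: hh_def Xsl_ex)
    have hc: "continuous_on {r..xb} hh"
      unfolding hh by (intro continuous_intros) (use xb in auto)
    have split: "integral {r..xb} hh = integral {r..0} hh + integral {0..xb} hh"
      by (rule int_split[OF hc]) (use r xb in auto)
    have I1: "integral {r..0} hh \<ge> integral {r..0} (\<lambda>u. 2 * u)"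
    proof (rule integral_le)
      show "hh integrable_on {r..0}" by (rule integrable_continuous_interval[OF continuous_on_subset[OF hc]]) (use xb in auto)
      show "(\<lambda>u. 2 * u) integrable_on {r..0}" by (rule integrable_continuous_interval) (auto intro!: continuous_intros)
      fix u assume u: "u \<in> {r..0}"
      then have u1: "1 - u \<ge> 1" by simp
      have "2 * u \<le> 2 * u / (1 - u)"
      proof -
        have "2 * u * (1 - u) \<le> 2 * u" using u by (simp add: algebra_simps)
        then show ?thesis using u1 by (simp add: le_divide_eq)
      qed
      then show "2 * u \<le> hh u" unfolding hh .
    qed
    have I1': "integral {r..0} (\<lambda>u. 2 * u) = 0^2 - r^2"
      by (rule ftc) (use r in \<open>auto intro!: derivative_eq_intros\<close>)
    have I2: "integral {0..xb} hh = (- 2 * xb - 2 * ln (1 - xb)) - (- 2 * 0 - 2 * ln (1 - 0))"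
    proof (rule ftc)
      show "0 \<le> xb" using xb by simp
      fix v assume v: "v \<in> {0..xb}"
      then have v1: "1 - v > 0" using xb by simp
      have "((\<lambda>v. - 2 * v - 2 * ln (1 - v)) has_real_derivative (- 2 * 1 - 2 * (- 1 / (1 - v)))) (at v)"
        using v1 by (auto intro!: derivative_eq_intros)
      moreover have "- 2 * 1 - 2 * (- 1 / (1 - v)) = hh v" unfolding hh using v1 by (simp add: field_simps)
      ultimately show "((\<lambda>v. - 2 * v - 2 * ln (1 - v)) has_real_derivative hh v) (at v)" by simp
    qed
    have rM: "r^2 < M^2"
    proof -
      have "(- r)^2 < M^2" using r by (intro power_strict_mono) auto
      then show ?thesis by simp
    qed
    have pe: "psi 2 (-1) 1 2 2 xb = integral {r..xb} hh" unfolding psi_def hh_def[abs_def] r_def by simp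
    have J1: "0 - r^2 \<le> integral {r..0} hh" using I1 I1' by simp
    have J2: "integral {0..xb} hh = - 2 * xb + (M^2 + 4)" using I2 lnxb by (simp add: field_simps)
    have "integral {r..xb} hh \<ge> (M^2 + 4) - 2 * xb - r^2" using split J1 J2 by linarith
    then have "psi 2 (-1) 1 2 2 xb \<ge> (M^2 + 4) - 2 * xb - r^2" using pe by simp
    moreover have "(M^2 + 4) - 2 * xb - r^2 > 0" using rM xb by simp
    ultimately show ?thesis by simp
  qed
  define m where "m = max xa xb"
  have m: "0 < m" "m < 1" using xa xb by (auto simp: m_def)
  have mO: "m \<in> open_int 2 (-1) 1 2 2" by (rule ex_O[OF m])
  have pc: "continuous_on {0..m} (psi 2 (-1) 1 2 2)" by (rule psi_cont0[OF Bd mO])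
  obtain z where z: "min xa xb \<le> z" "z \<le> m" "psi 2 (-1) 1 2 2 z = 0"
  proof (cases "xa \<le> xb")
    case True
    obtain z where "xa \<le> z" "z \<le> xb" "psi 2 (-1) 1 2 2 z = 0"
      using IVT'[of "psi 2 (-1) 1 2 2" xa 0 xb, OF _ _ True continuous_on_subset[OF pc]] psia psib True xa
      by (auto simp: m_def)
    then show ?thesis using that True by (auto simp: m_def)
  next
    case False
    obtain z where "xb \<le> z" "z \<le> xa" "psi 2 (-1) 1 2 2 z = 0"
      using IVT2'[of "psi 2 (-1) 1 2 2" xa 0 xb, OF _ _ _ continuous_on_subset[OF pc]] psia psib False xb
      by (auto simp: m_def)
    then show ?thesis using that False by (auto simp: m_def)
  qed
  have "z \<in> open_int 2 (-1) 1 2 2" by (rule ex_O) (use z xa xb m in auto)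
  then show ?thesis using z by blast
qed


lemma sdi_fun: "sdi phi B ap dp bm gm = (\<lambda>x. ((1 + dp) * deriv phi (inv phi (1 / (1 + dp)))) * psi B ap dp bm gm x)"
  by (simp add: sdi_def psi_def fun_eq_iff)

lemma part1_sdi:
  assumes Bd: "B > dp" "dp > 0" and cond: "sdi_cond bm gm B ap dp" and K: "(1 + dp) * deriv phi (inv phi (1 / (1 + dp))) \<noteq> 0"
  shows "at_most_one_zero_mult (sdi phi B ap dp bm gm) (open_int B ap dp bm gm)"
proof -
  define K where "K = (1 + dp) * deriv phi (inv phi (1 / (1 + dp)))"
  have K0: "K \<noteq> 0" using K by (simp add: K_def)
  have sf: "sdi phi B ap dp bm gm = (\<lambda>x. K * psi B ap dp bm gm x)" unfolding sdi_fun K_def ..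
  note P = part1_psi[OF Bd cond]
  show ?thesis unfolding at_most_one_zero_mult_def
  proof (intro conjI ballI impI)
    fix x assume xO: "x \<in> open_int B ap dp bm gm" and sx: "sdi phi B ap dp bm gm x = 0"
    have px: "psi B ap dp bm gm x = 0" using sx K0 unfolding sf by simp
    obtain d where d: "DERIV (psi B ap dp bm gm) x :> d" "d \<noteq> 0" using P xO px by blast
    have "DERIV (sdi phi B ap dp bm gm) x :> K * d" unfolding sf by (rule DERIV_cmult[OF d(1)])
    then show "simple_zero (sdi phi B ap dp bm gm) x" unfolding simple_zero_def using sx d(2) K0 by auto
  next
    fix x y assume xO: "x \<in> open_int B ap dp bm gm" and yO: "y \<in> open_int B ap dp bm gm"
      and s: "sdi phi B ap dp bm gm x = 0 \<and> sdi phi B ap dp bm gm y = 0"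
    then have "psi B ap dp bm gm x = 0 \<and> psi B ap dp bm gm y = 0" using K0 unfolding sf by simp
    then show "x = y" using P xO yO by blast
  qed
qed

theorem theorem2p5:
  fixes B ap bp cp dp bm gm :: real and phi :: "real \<Rightarrow> real"
  assumes "B > dp" and "dp > 0"
    and "\<forall>n s. ((deriv ^^ n) phi) differentiable (at s)"
    and "\<forall>s. deriv phi s > 0"
    and "(phi \<longlongrightarrow> 1) at_top" and "(phi \<longlongrightarrow> 0) at_bot"
  shows "(sdi_cond bm gm B ap dp \<longrightarrow>
            at_most_one_zero_mult (sdi phi B ap dp bm gm) (open_int B ap dp bm gm))
       \<and> (\<exists>bm' gm' B' ap' dp' :: real. B' > dp' \<and> dp' > 0 \<and> sdi_cond bm' gm' B' ap' dp' \<and>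
            (\<exists>x\<in>open_int B' ap' dp' bm' gm'. simple_zero (sdi phi B' ap' dp' bm' gm') x))
       \<and> (\<not> sdi_cond bm gm B ap dp \<longrightarrow>
            (\<forall>x\<in>insert 0 (open_int B ap dp bm gm). sdi phi B ap dp bm gm x = 0))"
proof (intro conjI impI)
  have Kpos: "(1 + d) * deriv phi (inv phi (1 / (1 + d))) \<noteq> 0" if "d > 0" for d :: real
    using assms(4) that by (metis add_pos_pos less_numeral_extra(1) mult_pos_pos order_less_irrefl)
  show "at_most_one_zero_mult (sdi phi B ap dp bm gm) (open_int B ap dp bm gm)" if "sdi_cond bm gm B ap dp"
    by (rule part1_sdi[OF assms(1,2) that Kpos[OF assms(2)]])
  show "\<exists>bm' gm' B' ap' dp' :: real. B' > dp' \<and> dp' > 0 \<and> sdi_cond bm' gm' B' ap' dp' \<and>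
            (\<exists>x\<in>open_int B' ap' dp' bm' gm'. simple_zero (sdi phi B' ap' dp' bm' gm') x)"
  proof (intro exI conjI)
    show "(2::real) > 1" "(1::real) > 0" by simp_all
    show c: "sdi_cond 2 2 2 (-1) 1" by (simp add: sdi_cond_def)
    obtain z where z: "z \<in> open_int 2 (-1) 1 2 2" "psi 2 (-1) 1 2 2 z = 0" using example_zero by blast
    have A: "at_most_one_zero_mult (sdi phi 2 (-1) 1 2 2) (open_int 2 (-1) 1 2 2)"
      by (rule part1_sdi[OF _ _ c Kpos]) simp_all
    have "sdi phi 2 (-1) 1 2 2 z = 0" using z(2) by (simp add: sdi_fun)
    then show "\<exists>x\<in>open_int 2 (-1) 1 2 2. simple_zero (sdi phi 2 (-1) 1 2 2) x"
      using A z(1) unfolding at_most_one_zero_mult_def by blast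
  qed
  show "\<forall>x\<in>insert 0 (open_int B ap dp bm gm). sdi phi B ap dp bm gm x = 0" if "\<not> sdi_cond bm gm B ap dp"
    using part3_psi[OF assms(1,2) that] by (simp add: sdi_fun)
qed

end
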